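(* Consider the full GAN dynamics with $N_r=N_g=N$ and all masses $p_i=\tilde p_j=1/N$, with $\lambda>0$ and $\mu=\eta_g/\eta_d>0$ fixed. Suppose the true points $x_1,\dots,x_N$ admit isolated neighborhoods, and that at every true point $x_i$ the kernel satisfies: $\frac{\partial K(x,x_i)}{\partial x}|_{x=x_i}=0$, $-\frac{\partial^2K(x,x_i)}{\partial x^2}|_{x=x_i}\in[k_1,k_2]I$ and $\frac{\partial^2K(x,x')}{\partial x\partial x'}|_{x=x'=x_i}\in[k_3,k_4]I$ for some constants $k_1,\dots,k_4>0$. Consider any equilibrium $(\theta^*,\tilde x_1^*,\dots,\tilde x_N^* )$ of the full dynamics with $\mathrm{supp}(P_g)\subseteq\mathrm{supp}(P_r)$, i.e. each $\tilde x_j^*\in\{x_1,\dots,x_N\}$. Then, for all sufficiently small $\eta_d>0$: if $P_g=P_r$ (each true point carries exactly one generated point) the equilibrium is locally stable, and otherwise it is locally unstable. In particular, $P_g=P_r$ is the only locally stable equilibrium with $\mathrm{supp}(P_g)\subseteq\mathrm{supp}(P_r)$.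
   Context: Full GAN dynamics: $a:\mathbb{R}^d\to\mathbb{R}^p$ is a $C^2$ feature map, $K(x,x')=a(x)^\top a(x')$ (assumed smooth), $f(x,\theta)=a(x)^\top\theta$. True distribution $P_r=\sum_{i=1}^{N_r}p_i\delta_{x_i}$, generated distribution $P_g=\sum_{j=1}^{N_g}\tilde p_j\delta_{\tilde x_j}$ with fixed masses; $\mathrm{supp}$ denotes the set of atoms. The dynamics on $(\theta,\tilde x_1,\dots,\tilde x_{N_g})$ is $\theta^{k+1}=\theta^k+\eta_d\big(\sum_i p_ia(x_i)-\sum_j\tilde p_ja(\tilde x_j^k)-\lambda\theta^k\big)$, $\tilde x_j^{k+1}=\tilde x_j^k+\eta_g\tilde p_j\nabla_xf(\tilde x_j^k,\theta^k)$, with $\lambda>0$, $\eta_d,\eta_g>0$, $\mu=\eta_g/\eta_d$. Isolated neighborhoods: there are open neighborhoods $V_i\ni x_i$ such that $K(x,x')=0$ for all $x\in V_i$, $x'\in V_l$, $i\neq l$. Here $[q_1,q_2]I$ denotes symmetric matrices $Q$ with $q_1I\preceq Q\preceq q_2I$. An equilibrium $z^*$ (fixed point of the update map) is locally stable if for every $\epsilon>0$ there is $\delta>0$ with $\|z^0-z^*\|<\delta\Rightarrow\|z^k-z^*\|<\epsilon$ for all $k$; locally unstable otherwise. *)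

theory Defs
  imports "HOL-Analysis.Analysis"
begin

definition kern :: "('d::euclidean_space \<Rightarrow> 'b::euclidean_space) \<Rightarrow> 'd \<Rightarrow> 'd \<Rightarrow> real" where
  "kern a x x' = a x \<bullet> a x'"

definition C2 :: "('d::euclidean_space \<Rightarrow> 'b::euclidean_space) \<Rightarrow> bool" where
  "C2 f \<longleftrightarrow> (\<exists>f' f''.
      (\<forall>x. (f has_derivative blinfun_apply (f' x)) (at x)) \<and>
      (\<forall>x. (f' has_derivative blinfun_apply (f'' x)) (at x)) \<and>
      continuous_on UNIV f'')"

text \<open>Smoothness (C^infinity) of a real-valued function: derivatives of every order exist.
  D n x [v_1,...,v_n] is the n-th derivative at x applied to v_1,...,v_n.\<close>
definition smooth_fun :: "('x::euclidean_space \<Rightarrow> real) \<Rightarrow> bool" where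
  "smooth_fun f \<longleftrightarrow> (\<exists>D :: nat \<Rightarrow> 'x \<Rightarrow> 'x list \<Rightarrow> real.
      (\<forall>x. D 0 x [] = f x) \<and>
      (\<forall>n vs x. length vs = n \<longrightarrow>
          ((\<lambda>y. D n y vs) has_derivative (\<lambda>h. D (Suc n) x (h # vs))) (at x)))"

definition grad :: "('d::real_inner \<Rightarrow> real) \<Rightarrow> 'd \<Rightarrow> 'd" where
  "grad f x = (THE D. GDERIV f x :> D)"

definition op_in_interval :: "real \<Rightarrow> real \<Rightarrow> ('d::real_inner \<Rightarrow> 'd) \<Rightarrow> bool" where
  "op_in_interval q1 q2 Q \<longleftrightarrow>
     (\<forall>u v. u \<bullet> Q v = Q u \<bullet> v) \<and>
     (\<forall>v. q1 * (v \<bullet> v) \<le> v \<bullet> Q v \<and> v \<bullet> Q v \<le> q2 * (v \<bullet> v))"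

definition neg_hessian_in :: "('d::euclidean_space \<Rightarrow> 'd \<Rightarrow> real) \<Rightarrow> 'd \<Rightarrow> real \<Rightarrow> real \<Rightarrow> bool" where
  "neg_hessian_in K x0 k1 k2 \<longleftrightarrow> (\<exists>G H.
      (\<forall>x. GDERIV (\<lambda>y. K y x0) x :> G x) \<and> (G has_derivative H) (at x0) \<and>
      op_in_interval k1 k2 (\<lambda>v. - H v))"

definition mixed_hessian_in :: "('d::euclidean_space \<Rightarrow> 'd \<Rightarrow> real) \<Rightarrow> 'd \<Rightarrow> real \<Rightarrow> real \<Rightarrow> bool" where
  "mixed_hessian_in K x0 k3 k4 \<longleftrightarrow> (\<exists>G M.
      (\<forall>x. GDERIV (\<lambda>y. K x y) x0 :> G x) \<and> (G has_derivative M) (at x0) \<and>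
      op_in_interval k3 k4 M)"

definition isolated_nbhds :: "('d::topological_space \<Rightarrow> 'd \<Rightarrow> real) \<Rightarrow> ('n \<Rightarrow> 'd) \<Rightarrow> bool" where
  "isolated_nbhds K xr \<longleftrightarrow> (\<exists>V :: 'n \<Rightarrow> 'd set.
      (\<forall>i. open (V i) \<and> xr i \<in> V i) \<and>
      (\<forall>i l. i \<noteq> l \<longrightarrow> (\<forall>x\<in>V i. \<forall>x'\<in>V l. K x x' = 0)))"

definition gan_step :: "('d::euclidean_space \<Rightarrow> 'b::euclidean_space) \<Rightarrow> ('n::finite \<Rightarrow> 'd) \<Rightarrow>
     real \<Rightarrow> real \<Rightarrow> real \<Rightarrow> 'b \<times> ('d, 'n) vec \<Rightarrow> 'b \<times> ('d, 'n) vec" where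
  "gan_step a xr lam eta_d eta_g = (\<lambda>(\<theta>, xg).
     (\<theta> + eta_d *\<^sub>R ((\<Sum>i\<in>UNIV. (1 / real CARD('n)) *\<^sub>R a (xr i))
                       - (\<Sum>j\<in>UNIV. (1 / real CARD('n)) *\<^sub>R a (xg $ j))
                       - lam *\<^sub>R \<theta>),
      \<chi> j. xg $ j + (eta_g * (1 / real CARD('n))) *\<^sub>R grad (\<lambda>x. a x \<bullet> \<theta>) (xg $ j)))"

definition locally_stable :: "('s::metric_space \<Rightarrow> 's) \<Rightarrow> 's \<Rightarrow> bool" where
  "locally_stable F z \<longleftrightarrow>
     (\<forall>\<epsilon>>0. \<exists>\<delta>>0. \<forall>z0. dist z0 z < \<delta> \<longrightarrow> (\<forall>k. dist ((F ^^ k) z0) z < \<epsilon>))"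

text \<open>P_g = P_r for equal masses 1/N: every point carries the same number of
  generated atoms as true atoms.\<close>
definition same_distr :: "('n::finite \<Rightarrow> 'd) \<Rightarrow> ('d, 'n) vec \<Rightarrow> bool" where
  "same_distr xr xg \<longleftrightarrow> (\<forall>y. card {j. xg $ j = y} = card {i. xr i = y})"

end

theory Submission
  imports Defs
begin

lemma lin_blin: "linear (blinfun_apply A)"
  by (simp add: bounded_linear.linear blinfun.bounded_linear_right)

lemma adj_blin: "x \<bullet> adjoint (blinfun_apply A) y = blinfun_apply A x \<bullet> y"
  for A :: "'a::euclidean_space \<Rightarrow>\<^sub>L 'c::euclidean_space"
  by (rule adjoint_works[OF lin_blin])

lemma gderiv_unique:
  assumes "GDERIV f x :> D" "GDERIV f x :> D'" shows "D = D'"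
proof -
  have "(\<lambda>h. h \<bullet> D) = (\<lambda>h. h \<bullet> D')"
    using assms unfolding gderiv_def by (meson has_derivative_unique)
  then have "(D - D') \<bullet> D = (D - D') \<bullet> D'" by metis
  then have "(D - D') \<bullet> (D - D') = 0" by (simp add: inner_diff_right)
  then show ?thesis by simp
qed

lemma grad_formula:
  fixes a :: "'d::euclidean_space \<Rightarrow> 'b::euclidean_space"
  assumes "(a has_derivative blinfun_apply A) (at x)"
  shows "grad (\<lambda>x. a x \<bullet> \<theta>) x = adjoint (blinfun_apply A) \<theta>"
proof -
  have "GDERIV (\<lambda>x. a x \<bullet> \<theta>) x :> adjoint (blinfun_apply A) \<theta>"
    unfolding gderiv_def
  proof -
    have "((\<lambda>x. a x \<bullet> \<theta>) has_derivative (\<lambda>h. blinfun_apply A h \<bullet> \<theta>)) (at x)"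
      by (rule has_derivative_inner_left[OF assms])
    moreover have "(\<lambda>h. blinfun_apply A h \<bullet> \<theta>) = (\<lambda>h. h \<bullet> adjoint (blinfun_apply A) \<theta>)"
      by (simp add: adj_blin)
    ultimately show "((\<lambda>x. a x \<bullet> \<theta>) has_derivative (\<lambda>h. h \<bullet> adjoint (blinfun_apply A) \<theta>)) (at x)" by simp
  qed
  then show ?thesis unfolding grad_def using gderiv_unique by blast
qed

lemma deriv_zero_open:
  assumes "open V" "p \<in> V" "\<forall>x\<in>V. g x = 0" "(g has_derivative D) (at p)"
  shows "D h = 0"
proof -
  have "(g has_derivative (\<lambda>_. 0)) (at p)"
    by (rule has_derivative_transform_within_open[where f="\<lambda>_. 0"]) (use assms in auto)
  then have "D = (\<lambda>_. 0)" using assms(4) has_derivative_unique by blast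
  then show ?thesis by simp
qed

lemma adj_norm:
  fixes A :: "'a::euclidean_space \<Rightarrow>\<^sub>L 'c::euclidean_space"
  shows "norm (adjoint (blinfun_apply A) u) \<le> norm A * norm u"
proof -
  let ?v = "adjoint (blinfun_apply A) u"
  have "(norm ?v)^2 = ?v \<bullet> ?v" by (simp add: power2_norm_eq_inner)
  also have "\<dots> = blinfun_apply A ?v \<bullet> u" by (simp add: adj_blin)
  also have "\<dots> \<le> norm (blinfun_apply A ?v) * norm u" by (rule norm_cauchy_schwarz)
  also have "\<dots> \<le> norm A * norm ?v * norm u"
    by (intro mult_right_mono norm_blinfun) auto
  finally have "norm ?v * norm ?v \<le> (norm A * norm u) * norm ?v" by (simp add: power2_eq_square algebra_simps)
  then show ?thesis
    by (cases "norm ?v = 0") (auto simp: mult_le_cancel_right)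
qed

lemma deriv_app:
  assumes "(F has_derivative blinfun_apply D) (at p)"
  shows "((\<lambda>x. blinfun_apply (F x) e \<bullet> q) has_derivative (\<lambda>h. blinfun_apply (blinfun_apply D h) e \<bullet> q)) (at p)"
proof -
  have "((\<lambda>x. blinfun_apply (F x) e) has_derivative (\<lambda>h. blinfun_apply (blinfun_apply D h) e)) (at p)"
    by (rule bounded_linear.has_derivative[OF blinfun.bounded_linear_left assms])
  then show ?thesis by (rule has_derivative_inner_left)
qed

lemma hess_link:
  fixes a :: "'d::euclidean_space \<Rightarrow> 'b::euclidean_space"
  assumes da: "\<And>x. (a has_derivative blinfun_apply (f' x)) (at x)"
    and df: "\<And>x. (f' has_derivative blinfun_apply (f'' x)) (at x)"
    and h: "neg_hessian_in (kern a) p k1 k2"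
  shows "blinfun_apply (blinfun_apply (f'' p) e) e \<bullet> a p \<le> - k1 * (e \<bullet> e)"
proof -
  obtain G H where G: "\<forall>x. GDERIV (\<lambda>y. kern a y p) x :> G x" and H: "(G has_derivative H) (at p)"
    and I: "op_in_interval k1 k2 (\<lambda>v. - H v)"
    using h unfolding neg_hessian_in_def by blast
  have Gx: "G x = adjoint (blinfun_apply (f' x)) (a p)" for x
  proof -
    have "GDERIV (\<lambda>y. a y \<bullet> a p) x :> G x" using G by (simp add: kern_def)
    then have "grad (\<lambda>y. a y \<bullet> a p) x = G x" unfolding grad_def using gderiv_unique by blast
    then show ?thesis using grad_formula[OF da] by metis
  qed
  have d1: "((\<lambda>x. G x \<bullet> e) has_derivative (\<lambda>h. H h \<bullet> e)) (at p)"
    by (rule has_derivative_inner_left[OF H])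
  have eq: "G x \<bullet> e = blinfun_apply (f' x) e \<bullet> a p" for x
    by (simp add: Gx inner_commute adj_blin)
  have d2: "((\<lambda>x. G x \<bullet> e) has_derivative (\<lambda>h. blinfun_apply (blinfun_apply (f'' p) h) e \<bullet> a p)) (at p)"
    unfolding eq by (rule deriv_app[OF df])
  have "(\<lambda>h. H h \<bullet> e) = (\<lambda>h. blinfun_apply (blinfun_apply (f'' p) h) e \<bullet> a p)"
    using has_derivative_unique[OF d1 d2] .
  then have "H e \<bullet> e = blinfun_apply (blinfun_apply (f'' p) e) e \<bullet> a p" by metis
  moreover have "k1 * (e \<bullet> e) \<le> e \<bullet> (- H e)" using I unfolding op_in_interval_def by blast
  ultimately show ?thesis by (simp add: inner_commute)
qed

lemma mixed_link:
  fixes a :: "'d::euclidean_space \<Rightarrow> 'b::euclidean_space"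
  assumes da: "\<And>x. (a has_derivative blinfun_apply (f' x)) (at x)"
    and h: "mixed_hessian_in (kern a) p k3 k4"
  shows "k3 * (v \<bullet> v) \<le> blinfun_apply (f' p) v \<bullet> blinfun_apply (f' p) v"
proof -
  obtain G M where G: "\<forall>x. GDERIV (\<lambda>y. kern a x y) p :> G x" and M: "(G has_derivative M) (at p)"
    and I: "op_in_interval k3 k4 M"
    using h unfolding mixed_hessian_in_def by blast
  have Gx: "G x = adjoint (blinfun_apply (f' p)) (a x)" for x
  proof -
    have e: "(\<lambda>y. kern a x y) = (\<lambda>y. a y \<bullet> a x)" by (simp add: kern_def inner_commute fun_eq_iff)
    have "GDERIV (\<lambda>y. a y \<bullet> a x) p :> G x" using G e by metis
    then have "grad (\<lambda>y. a y \<bullet> a x) p = G x" unfolding grad_def using gderiv_unique by blast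
    then show ?thesis using grad_formula[OF da] by metis
  qed
  have d1: "((\<lambda>x. G x \<bullet> v) has_derivative (\<lambda>h. M h \<bullet> v)) (at p)"
    by (rule has_derivative_inner_left[OF M])
  have eq: "G x \<bullet> v = a x \<bullet> blinfun_apply (f' p) v" for x
    by (simp add: Gx inner_commute adj_blin)
  have d2: "((\<lambda>x. G x \<bullet> v) has_derivative (\<lambda>h. blinfun_apply (f' p) h \<bullet> blinfun_apply (f' p) v)) (at p)"
    unfolding eq by (rule has_derivative_inner_left[OF da])
  have "(\<lambda>h. M h \<bullet> v) = (\<lambda>h. blinfun_apply (f' p) h \<bullet> blinfun_apply (f' p) v)"
    using has_derivative_unique[OF d1 d2] .
  then have "M v \<bullet> v = blinfun_apply (f' p) v \<bullet> blinfun_apply (f' p) v" by metis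
  moreover have "k3 * (v \<bullet> v) \<le> v \<bullet> M v" using I unfolding op_in_interval_def by blast
  ultimately show ?thesis by (simp add: inner_commute)
qed

lemma iso_second:
  fixes a :: "'d::euclidean_space \<Rightarrow> 'b::euclidean_space"
  assumes da: "\<And>x. (a has_derivative blinfun_apply (f' x)) (at x)"
    and df: "\<And>x. (f' has_derivative blinfun_apply (f'' x)) (at x)"
    and V: "open V" "p \<in> V" and z: "\<forall>x\<in>V. a x \<bullet> q = 0"
  shows "blinfun_apply (blinfun_apply (f'' p) h) e \<bullet> q = 0"
proof -
  have "\<forall>x\<in>V. blinfun_apply (f' x) e \<bullet> q = 0"
  proof
    fix x assume x: "x \<in> V"
    show "blinfun_apply (f' x) e \<bullet> q = 0"
      by (rule deriv_zero_open[OF V(1) x z, of "\<lambda>h. blinfun_apply (f' x) h \<bullet> q"])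
         (rule has_derivative_inner_left[OF da])
  qed
  then show ?thesis
    by (rule deriv_zero_open[OF V, of "\<lambda>x. blinfun_apply (f' x) e \<bullet> q"]) (rule deriv_app[OF df])
qed

lemma iso_mixed:
  fixes a :: "'d::euclidean_space \<Rightarrow> 'b::euclidean_space"
  assumes da: "\<And>x. (a has_derivative blinfun_apply (f' x)) (at x)"
    and V: "open V" "p \<in> V" "open W" "q \<in> W" and z: "\<forall>x\<in>V. \<forall>y\<in>W. a x \<bullet> a y = 0"
  shows "blinfun_apply (f' p) v \<bullet> blinfun_apply (f' q) w = 0"
proof -
  have "\<forall>y\<in>W. blinfun_apply (f' p) v \<bullet> a y = 0"
  proof
    fix y assume y: "y \<in> W"
    show "blinfun_apply (f' p) v \<bullet> a y = 0"
      by (rule deriv_zero_open[OF V(1,2), of "\<lambda>x. a x \<bullet> a y"]) (use z y in auto,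
          rule has_derivative_inner_left[OF da])
  qed
  then have "\<forall>y\<in>W. a y \<bullet> blinfun_apply (f' p) v = 0" by (simp add: inner_commute)
  then have "blinfun_apply (f' q) w \<bullet> blinfun_apply (f' p) v = 0"
    by (rule deriv_zero_open[OF V(3,4), of "\<lambda>y. a y \<bullet> blinfun_apply (f' p) v"])
       (rule has_derivative_inner_left[OF da])
  then show ?thesis by (simp add: inner_commute)
qed

definition T2 :: "('d::real_normed_vector \<Rightarrow>\<^sub>L 'd \<Rightarrow>\<^sub>L 'b::real_normed_vector) \<Rightarrow> 'd \<Rightarrow> 'b" where
  "T2 A e = blinfun_apply (blinfun_apply A e) e"

lemma T2_norm: "norm (T2 A e) \<le> norm A * (norm e * norm e)"
proof -
  have "norm (T2 A e) \<le> norm (blinfun_apply A e) * norm e" unfolding T2_def by (rule norm_blinfun)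
  also have "\<dots> \<le> norm A * norm e * norm e" by (intro mult_right_mono norm_blinfun) auto
  finally show ?thesis by (simp add: mult.assoc)
qed

lemma T2_diff: "T2 (A - B) e = T2 A e - T2 B e"
  unfolding T2_def by (simp add: blinfun.diff_left)

lemma T2_inner_bound:
  fixes A :: "'d::real_inner \<Rightarrow>\<^sub>L 'd \<Rightarrow>\<^sub>L 'b::real_inner"
  shows "\<bar>T2 A e \<bullet> q\<bar> \<le> norm A * norm q * (e \<bullet> e)"
proof -
  have "\<bar>T2 A e \<bullet> q\<bar> \<le> norm (T2 A e) * norm q" by (rule Cauchy_Schwarz_ineq2)
  also have "\<dots> \<le> norm A * (norm e * norm e) * norm q" by (intro mult_right_mono T2_norm) auto
  finally show ?thesis by (simp add: dot_square_norm power2_eq_square mult_ac)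
qed

lemma local_convex:
  fixes f' :: "'d::euclidean_space \<Rightarrow> 'd \<Rightarrow>\<^sub>L 'b::euclidean_space"
  assumes df: "\<And>x. (f' has_derivative blinfun_apply (f'' x)) (at x)"
    and cf: "continuous_on UNIV f''"
    and al: "\<alpha> > 0"
    and base: "\<And>e. T2 (f'' p) e \<bullet> \<theta>s \<ge> 2 * \<alpha> * (e \<bullet> e)"
  shows "\<exists>\<rho>>0. \<forall>\<theta> x1 x2. dist \<theta> \<theta>s < \<rho> \<and> dist x1 p < \<rho> \<and> dist x2 p < \<rho> \<longrightarrow>
     blinfun_apply (f' x1) (x1 - x2) \<bullet> \<theta> - blinfun_apply (f' x2) (x1 - x2) \<bullet> \<theta> \<ge> \<alpha> * ((x1 - x2) \<bullet> (x1 - x2))"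
proof -
  define \<epsilon>1 where "\<epsilon>1 = \<alpha> / (2 * (norm \<theta>s + 1))"
  have e1: "\<epsilon>1 > 0" unfolding \<epsilon>1_def using al by (intro divide_pos_pos mult_pos_pos) (auto intro: add_nonneg_pos)
  have nt: "norm \<theta>s + 1 > 0" by (smt (verit) norm_ge_zero)
  obtain d where d: "d > 0" and dd: "\<And>x. dist x p < d \<Longrightarrow> dist (f'' x) (f'' p) < \<epsilon>1"
    using cf e1 unfolding continuous_on_iff by blast
  define M where "M = norm (f'' p) + \<epsilon>1"
  have M: "M > 0" using e1 by (simp add: M_def add_nonneg_pos)
  define \<rho> where "\<rho> = min d (\<alpha> / (2 * M))"
  have rho: "\<rho> > 0" using d al M by (simp add: \<rho>_def)
  have pt: "T2 (f'' x) e \<bullet> \<theta> \<ge> \<alpha> * (e \<bullet> e)" if th: "dist \<theta> \<theta>s < \<rho>" and x: "dist x p < \<rho>" for \<theta> x e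
  proof -
    have nx: "norm (f'' x - f'' p) < \<epsilon>1" using dd[of x] x by (simp add: \<rho>_def dist_norm)
    have nM: "norm (f'' x) \<le> M"
      using norm_triangle_ineq[of "f'' x - f'' p" "f'' p"] nx by (simp add: M_def)
    have ee: "e \<bullet> e \<ge> 0" by simp
    have "T2 (f'' x) e \<bullet> \<theta> = T2 (f'' p) e \<bullet> \<theta>s + T2 (f'' x) e \<bullet> (\<theta> - \<theta>s) + T2 (f'' x - f'' p) e \<bullet> \<theta>s"
      by (simp add: T2_diff inner_diff_left inner_diff_right)
    moreover have "\<bar>T2 (f'' x) e \<bullet> (\<theta> - \<theta>s)\<bar> \<le> \<alpha> / 2 * (e \<bullet> e)"
    proof -
      have "\<bar>T2 (f'' x) e \<bullet> (\<theta> - \<theta>s)\<bar> \<le> norm (f'' x) * norm (\<theta> - \<theta>s) * (e \<bullet> e)" by (rule T2_inner_bound)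
      also have "\<dots> \<le> M * (\<alpha> / (2 * M)) * (e \<bullet> e)"
        using th nM ee M by (intro mult_right_mono mult_mono) (auto simp: \<rho>_def dist_norm)
      also have "\<dots> = \<alpha> / 2 * (e \<bullet> e)" using M by simp
      finally show ?thesis .
    qed
    moreover have "\<bar>T2 (f'' x - f'' p) e \<bullet> \<theta>s\<bar> \<le> \<alpha> / 2 * (e \<bullet> e)"
    proof -
      have "\<bar>T2 (f'' x - f'' p) e \<bullet> \<theta>s\<bar> \<le> norm (f'' x - f'' p) * norm \<theta>s * (e \<bullet> e)" by (rule T2_inner_bound)
      also have "\<dots> \<le> \<epsilon>1 * (norm \<theta>s + 1) * (e \<bullet> e)"
        using nx ee e1 by (intro mult_right_mono mult_mono) auto
      also have "\<dots> = \<alpha> / 2 * (e \<bullet> e)" using nt by (simp add: \<epsilon>1_def field_simps)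
      finally show ?thesis .
    qed
    ultimately show ?thesis using base[of e] by linarith
  qed
  show ?thesis
  proof (intro exI[of _ \<rho>] conjI allI impI rho)
    fix \<theta> x1 x2 assume H: "dist \<theta> \<theta>s < \<rho> \<and> dist x1 p < \<rho> \<and> dist x2 p < \<rho>"
    define e where "e = x1 - x2"
    define \<phi> where "\<phi> t = blinfun_apply (f' (x2 + t *\<^sub>R e)) e \<bullet> \<theta>" for t :: real
    have der: "(\<phi> has_derivative (\<lambda>s. s * (T2 (f'' (x2 + t *\<^sub>R e)) e \<bullet> \<theta>))) (at t within {0..1})" for t
    proof -
      have l: "((\<lambda>t. x2 + t *\<^sub>R e) has_derivative (\<lambda>s. s *\<^sub>R e)) (at t)"
        by (auto intro!: derivative_eq_intros)
      have "(\<phi> has_derivative (\<lambda>s. blinfun_apply (blinfun_apply (f'' (x2 + t *\<^sub>R e)) (s *\<^sub>R e)) e \<bullet> \<theta>)) (at t)"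
        unfolding \<phi>_def
        using has_derivative_compose[OF l deriv_app[OF df[of "x2 + t *\<^sub>R e"], where e=e and q=\<theta>]] by (simp add: o_def)
      moreover have "(\<lambda>s. blinfun_apply (blinfun_apply (f'' (x2 + t *\<^sub>R e)) (s *\<^sub>R e)) e \<bullet> \<theta>)
          = (\<lambda>s. s * (T2 (f'' (x2 + t *\<^sub>R e)) e \<bullet> \<theta>))"
        by (simp add: T2_def blinfun.scaleR_right blinfun.scaleR_left)
      ultimately show ?thesis by (simp add: has_derivative_at_withinI)
    qed
    obtain t where t: "t \<in> {0<..<1}" and mv: "\<phi> 1 - \<phi> 0 = (1 - 0) * (T2 (f'' (x2 + t *\<^sub>R e)) e \<bullet> \<theta>)"
      using mvt_simple[of 0 1 \<phi>, OF _ der] by auto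
    have "x2 + t *\<^sub>R e - p = (1 - t) *\<^sub>R (x2 - p) + t *\<^sub>R (x1 - p)"
      by (simp add: e_def algebra_simps)
    then have "dist (x2 + t *\<^sub>R e) p \<le> (1 - t) * dist x2 p + t * dist x1 p"
      using t norm_triangle_ineq[of "(1 - t) *\<^sub>R (x2 - p)" "t *\<^sub>R (x1 - p)"]
      by (simp add: dist_norm)
    also have "\<dots> < (1 - t) * \<rho> + t * \<rho>"
      using t H by (intro add_less_le_mono mult_strict_left_mono mult_left_mono) auto
    finally have "dist (x2 + t *\<^sub>R e) p < \<rho>" by (simp add: algebra_simps)
    then have "T2 (f'' (x2 + t *\<^sub>R e)) e \<bullet> \<theta> \<ge> \<alpha> * (e \<bullet> e)" using pt H by blast
    moreover have "\<phi> 1 = blinfun_apply (f' x1) e \<bullet> \<theta>" "\<phi> 0 = blinfun_apply (f' x2) e \<bullet> \<theta>"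
      by (simp_all add: \<phi>_def e_def)
    ultimately show "blinfun_apply (f' x1) (x1 - x2) \<bullet> \<theta> - blinfun_apply (f' x2) (x1 - x2) \<bullet> \<theta> \<ge> \<alpha> * ((x1 - x2) \<bullet> (x1 - x2))"
      using mv by (simp add: e_def)
  qed
qed

locale gan =
  fixes a :: "'d::euclidean_space \<Rightarrow> 'b::euclidean_space"
    and xr :: "'n::finite \<Rightarrow> 'd"
    and f' :: "'d \<Rightarrow> 'd \<Rightarrow>\<^sub>L 'b" and f'' :: "'d \<Rightarrow> 'd \<Rightarrow>\<^sub>L 'd \<Rightarrow>\<^sub>L 'b"
    and V :: "'n \<Rightarrow> 'd set" and lam mu k1 k3 :: real
  assumes da: "\<And>x. (a has_derivative blinfun_apply (f' x)) (at x)"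
    and df: "\<And>x. (f' has_derivative blinfun_apply (f'' x)) (at x)"
    and cf: "continuous_on UNIV f''"
    and lam_pos: "lam > 0" and mu_pos: "mu > 0" and k1_pos: "k1 > 0" and k3_pos: "k3 > 0"
    and Vo: "\<And>i. open (V i)" and Vx: "\<And>i. xr i \<in> V i"
    and Vz: "\<And>i l x y. i \<noteq> l \<Longrightarrow> x \<in> V i \<Longrightarrow> y \<in> V l \<Longrightarrow> a x \<bullet> a y = 0"
    and hs: "\<And>i e. T2 (f'' (xr i)) e \<bullet> a (xr i) \<le> - k1 * (e \<bullet> e)"
    and mx: "\<And>i v. k3 * (v \<bullet> v) \<le> blinfun_apply (f' (xr i)) v \<bullet> blinfun_apply (f' (xr i)) v"
begin

lemma zero_second: "i \<noteq> l \<Longrightarrow> T2 (f'' (xr i)) e \<bullet> a (xr l) = 0"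
proof -
  assume ne: "i \<noteq> l"
  have z: "\<forall>x\<in>V i. a x \<bullet> a (xr l) = 0" using Vz[OF ne] Vx by auto
  show ?thesis using iso_second[OF da df Vo Vx z] by (simp add: T2_def)
qed

lemma inj_xr: "inj xr"
proof (rule injI)
  fix i l assume eq: "xr i = xr l"
  show "i = l"
  proof (rule ccontr)
    assume ne: "i \<noteq> l"
    obtain b :: 'd where b: "b \<in> Basis" using nonempty_Basis by blast
    have "T2 (f'' (xr i)) b \<bullet> a (xr l) = 0" by (rule zero_second[OF ne])
    moreover have "T2 (f'' (xr i)) b \<bullet> a (xr i) \<le> - k1 * (b \<bullet> b)" by (rule hs)
    ultimately show False using eq b k1_pos by simp
  qed
qed

lemma step:
  "gan_step a xr lam eta g (\<theta>, xg) =
    (\<theta> + eta *\<^sub>R ((\<Sum>i\<in>UNIV. (1 / real CARD('n)) *\<^sub>R a (xr i))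
                       - (\<Sum>j\<in>UNIV. (1 / real CARD('n)) *\<^sub>R a (xg $ j)) - lam *\<^sub>R \<theta>),
     \<chi> j. xg $ j + (g * (1 / real CARD('n))) *\<^sub>R adjoint (blinfun_apply (f' (xg $ j))) \<theta>)"
  unfolding gan_step_def by (simp add: grad_formula[OF da])

lemma step_fst: "fst (gan_step a xr lam eta g z) = fst z + eta *\<^sub>R ((\<Sum>i\<in>UNIV. (1 / real CARD('n)) *\<^sub>R a (xr i))
                       - (\<Sum>j\<in>UNIV. (1 / real CARD('n)) *\<^sub>R a (snd z $ j)) - lam *\<^sub>R fst z)"
  using step[of eta g "fst z" "snd z"] by simp

lemma step_snd: "snd (gan_step a xr lam eta g z) $ j = snd z $ j + (g * (1 / real CARD('n))) *\<^sub>R adjoint (blinfun_apply (f' (snd z $ j))) (fst z)"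
  using step[of eta g "fst z" "snd z"] by simp

lemma fixed_theta:
  assumes eta: "eta > 0" and fp: "gan_step a xr lam eta g (\<theta>s, xgs) = (\<theta>s, xgs)"
  shows "lam *\<^sub>R \<theta>s = (\<Sum>i\<in>UNIV. (1 / real CARD('n)) *\<^sub>R a (xr i)) - (\<Sum>j\<in>UNIV. (1 / real CARD('n)) *\<^sub>R a (xgs $ j))"
proof -
  have "fst (gan_step a xr lam eta g (\<theta>s, xgs)) = \<theta>s" using fp by simp
  then have "eta *\<^sub>R ((\<Sum>i\<in>UNIV. (1 / real CARD('n)) *\<^sub>R a (xr i))
                       - (\<Sum>j\<in>UNIV. (1 / real CARD('n)) *\<^sub>R a (xgs $ j)) - lam *\<^sub>R \<theta>s) = 0"
    using step_fst[of eta g "(\<theta>s, xgs)"] by simp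
  then show ?thesis using eta by simp
qed

lemma not_same_case:
  assumes supp: "\<forall>j. xgs $ j \<in> range xr" and nsd: "\<not> same_distr xr xgs"
  shows "\<exists>i0 j1 j2. j1 \<noteq> j2 \<and> xgs $ j1 = xr i0 \<and> xgs $ j2 = xr i0"
proof (rule ccontr)
  assume H: "\<not> ?thesis"
  have injg: "inj (\<lambda>j. xgs $ j)"
  proof (rule injI)
    fix j1 j2 assume "xgs $ j1 = xgs $ j2"
    moreover obtain i where "xgs $ j1 = xr i" using supp by blast
    ultimately show "j1 = j2" using H by metis
  qed
  have sub: "range (\<lambda>j. xgs $ j) \<subseteq> range xr" using supp by blast
  have "card (range (\<lambda>j. xgs $ j)) = card (range xr)"
    using card_image[OF injg] card_image[OF inj_xr] by simp
  then have eqr: "range (\<lambda>j. xgs $ j) = range xr"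
    using card_subset_eq[OF _ sub] by simp
  have "same_distr xr xgs"
    unfolding same_distr_def
  proof
    fix y
    show "card {j. xgs $ j = y} = card {i. xr i = y}"
    proof (cases "y \<in> range xr")
      case True
      then obtain i where i: "y = xr i" by blast
      from True eqr obtain j where j: "y = xgs $ j" by (metis rangeE)
      have "{i'. xr i' = y} = {i}" using i inj_xr by (auto dest: injD)
      moreover have "{j'. xgs $ j' = y} = {j}" using j injg by (auto dest: injD)
      ultimately show ?thesis by simp
    next
      case False
      then have "{i'. xr i' = y} = {}" "{j'. xgs $ j' = y} = {}" using eqr by auto
      then show ?thesis by simp
    qed
  qed
  then show False using nsd by simp
qed

end

context gan begin

lemma unstable:
  assumes eta: "eta > 0" and fp: "gan_step a xr lam eta (mu * eta) (\<theta>s, xgs) = (\<theta>s, xgs)"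
    and supp: "\<forall>j. xgs $ j \<in> range xr" and nsd: "\<not> same_distr xr xgs"
  shows "\<not> locally_stable (gan_step a xr lam eta (mu * eta)) (\<theta>s, xgs)"
proof
  assume st: "locally_stable (gan_step a xr lam eta (mu * eta)) (\<theta>s, xgs)"
  define F where "F = gan_step a xr lam eta (mu * eta)"
  define N where "N = real CARD('n)"
  have N: "N > 0" by (simp add: N_def)
  obtain i0 j1 j2 where j12: "j1 \<noteq> j2" "xgs $ j1 = xr i0" "xgs $ j2 = xr i0"
    using not_same_case[OF supp nsd] by blast
  define p where "p = xr i0"
  define m where "m = card {j. xgs $ j = p}"
  have m2: "m \<ge> 2"
  proof -
    have "{j1, j2} \<subseteq> {j. xgs $ j = p}" using j12 by (auto simp: p_def)
    then have "card {j1, j2} \<le> m" unfolding m_def by (intro card_mono) auto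
    then show ?thesis using j12 by simp
  qed
  have th: "lam *\<^sub>R \<theta>s = (\<Sum>i\<in>UNIV. (1 / N) *\<^sub>R a (xr i)) - (\<Sum>j\<in>UNIV. (1 / N) *\<^sub>R a (xgs $ j))"
    using fixed_theta[OF eta fp] by (simp add: N_def)
  define \<alpha> where "\<alpha> = k1 / (2 * lam * N)"
  have al: "\<alpha> > 0" using k1_pos lam_pos N by (simp add: \<alpha>_def)
  have base: "T2 (f'' p) e \<bullet> \<theta>s \<ge> 2 * \<alpha> * (e \<bullet> e)" for e
  proof -
    define s where "s = T2 (f'' p) e \<bullet> a p"
    have s: "s \<le> - k1 * (e \<bullet> e)" unfolding s_def p_def by (rule hs)
    have zi: "T2 (f'' p) e \<bullet> a (xr i) = (if i = i0 then s else 0)" for i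
      using zero_second[of i0 i e] by (auto simp: s_def p_def)
    have zj: "T2 (f'' p) e \<bullet> a (xgs $ j) = (if xgs $ j = p then s else 0)" for j
    proof (cases "xgs $ j = p")
      case True then show ?thesis by (simp add: s_def)
    next
      case False
      obtain i where i: "xgs $ j = xr i" using supp by blast
      then have "i \<noteq> i0" using False by (auto simp: p_def)
      then show ?thesis using zero_second[of i0 i e] i False by (simp add: p_def)
    qed
    have sumi: "(\<Sum>i\<in>UNIV. T2 (f'' p) e \<bullet> a (xr i)) = s" by (simp add: zi)
    have sumj: "(\<Sum>j\<in>UNIV. T2 (f'' p) e \<bullet> a (xgs $ j)) = real m * s"
    proof -
      have "(\<Sum>j\<in>UNIV. T2 (f'' p) e \<bullet> a (xgs $ j)) = (\<Sum>j\<in>UNIV. if xgs $ j = p then s else 0)"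
        by (simp add: zj)
      also have "\<dots> = (\<Sum>j\<in>{j\<in>UNIV. xgs $ j = p}. s)"
        by (rule sum.inter_filter[symmetric]) simp
      also have "\<dots> = real m * s" by (simp add: m_def)
      finally show ?thesis .
    qed
    have "lam * (T2 (f'' p) e \<bullet> \<theta>s) = T2 (f'' p) e \<bullet> (lam *\<^sub>R \<theta>s)" by simp
    also have "\<dots> = (1 / N) * (\<Sum>i\<in>UNIV. T2 (f'' p) e \<bullet> a (xr i)) - (1 / N) * (\<Sum>j\<in>UNIV. T2 (f'' p) e \<bullet> a (xgs $ j))"
      unfolding th by (simp add: inner_diff_right inner_sum_right sum_distrib_left)
    also have "\<dots> = (1 / N) * ((1 - real m) * s)" by (simp add: sumi sumj algebra_simps)
    finally have eq: "lam * (T2 (f'' p) e \<bullet> \<theta>s) = (1 / N) * ((1 - real m) * s)" .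
    have "(1 - real m) * s \<ge> k1 * (e \<bullet> e)"
    proof -
      have "(1 - real m) * s = (real m - 1) * (- s)" by (simp add: algebra_simps)
      also have "\<dots> \<ge> 1 * (k1 * (e \<bullet> e))"
        using m2 s k1_pos by (intro mult_mono) auto
      finally show ?thesis by simp
    qed
    then have "lam * (T2 (f'' p) e \<bullet> \<theta>s) \<ge> (1 / N) * (k1 * (e \<bullet> e))"
      using eq N by (simp add: divide_right_mono)
    then have "(1 / N) * (k1 * (e \<bullet> e)) / lam \<le> (lam * (T2 (f'' p) e \<bullet> \<theta>s)) / lam"
      using lam_pos by (intro divide_right_mono) auto
    then have "T2 (f'' p) e \<bullet> \<theta>s \<ge> (1 / N) * (k1 * (e \<bullet> e)) / lam"
      using lam_pos by simp
    then show ?thesis using lam_pos N by (simp add: \<alpha>_def field_simps)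
  qed
  obtain \<rho> where rho: "\<rho> > 0" and conv: "\<And>\<theta> x1 x2. dist \<theta> \<theta>s < \<rho> \<Longrightarrow> dist x1 p < \<rho> \<Longrightarrow> dist x2 p < \<rho> \<Longrightarrow>
     blinfun_apply (f' x1) (x1 - x2) \<bullet> \<theta> - blinfun_apply (f' x2) (x1 - x2) \<bullet> \<theta> \<ge> \<alpha> * ((x1 - x2) \<bullet> (x1 - x2))"
    using local_convex[OF df cf al base] by blast
  obtain \<delta> where dl: "\<delta> > 0" and stb: "\<And>z0 k. dist z0 (\<theta>s, xgs) < \<delta> \<Longrightarrow> dist ((F ^^ k) z0) (\<theta>s, xgs) < \<rho>"
    using st rho unfolding locally_stable_def F_def by blast
  obtain b :: 'd where b: "b \<in> Basis" using nonempty_Basis by blast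
  define X0 where "X0 = (\<chi> j. if j = j1 then xgs $ j + (\<delta> / 2) *\<^sub>R b else xgs $ j)"
  define z0 where "z0 = (\<theta>s, X0)"
  have "dist z0 (\<theta>s, xgs) = dist X0 xgs" by (simp add: z0_def dist_Pair_Pair)
  also have "\<dots> \<le> (\<Sum>j\<in>UNIV. dist (X0 $ j) (xgs $ j))"
    unfolding dist_vec_def by (rule L2_set_le_sum) simp
  also have "\<dots> = (\<Sum>j\<in>UNIV. if j = j1 then \<delta> / 2 else 0)"
    using b dl by (intro sum.cong) (auto simp: X0_def dist_norm)
  also have "\<dots> = \<delta> / 2" by simp
  finally have dz0: "dist z0 (\<theta>s, xgs) < \<delta>" using dl by simp
  define z where "z k = (F ^^ k) z0" for k
  define e where "e k = snd (z k) $ j1 - snd (z k) $ j2" for k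
  have zin: "dist (fst (z k)) \<theta>s < \<rho> \<and> dist (snd (z k) $ j1) p < \<rho> \<and> dist (snd (z k) $ j2) p < \<rho>" for k
  proof -
    have d: "dist (z k) (\<theta>s, xgs) < \<rho>" using stb[OF dz0] by (simp add: z_def)
    have "dist (fst (z k)) \<theta>s < \<rho>" using dist_fst_le[of "z k" "(\<theta>s, xgs)"] d by simp
    moreover
    have "dist (snd (z k) $ j) (xgs $ j) < \<rho>" for j
      using dist_snd_le[of "z k" "(\<theta>s, xgs)"] dist_vec_nth_le[of "snd (z k)" j xgs] d by simp
    ultimately show ?thesis using j12 by (metis p_def)
  qed
  define \<kappa> where "\<kappa> = mu * eta * (1 / N)"
  have ka: "\<kappa> > 0" using mu_pos eta N by (simp add: \<kappa>_def)
  have rec: "z (Suc k) = F (z k)" for k by (simp add: z_def)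
  have grow: "norm (e (Suc k)) \<ge> (1 + \<kappa> * \<alpha>) * norm (e k)" for k
  proof -
    define X where "X = snd (z k)"
    define \<theta> where "\<theta> = fst (z k)"
    have sj: "snd (z (Suc k)) $ j = X $ j + \<kappa> *\<^sub>R adjoint (blinfun_apply (f' (X $ j))) \<theta>" for j
      unfolding rec F_def step_snd by (simp add: X_def \<theta>_def \<kappa>_def N_def)
    have en: "e (Suc k) = e k + \<kappa> *\<^sub>R (adjoint (blinfun_apply (f' (X $ j1))) \<theta> - adjoint (blinfun_apply (f' (X $ j2))) \<theta>)"
      unfolding e_def sj by (simp add: X_def algebra_simps)
    have "e (Suc k) \<bullet> e k = e k \<bullet> e k + \<kappa> * (blinfun_apply (f' (X $ j1)) (e k) \<bullet> \<theta> - blinfun_apply (f' (X $ j2)) (e k) \<bullet> \<theta>)"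
      unfolding en by (simp add: inner_add_left inner_diff_left inner_commute[of "adjoint _ _"] adj_blin)
    also have "\<dots> \<ge> e k \<bullet> e k + \<kappa> * (\<alpha> * (e k \<bullet> e k))"
      using conv[of \<theta> "X $ j1" "X $ j2"] zin[of k] ka by (simp add: X_def \<theta>_def e_def)
    finally have "(1 + \<kappa> * \<alpha>) * (norm (e k) * norm (e k)) \<le> e (Suc k) \<bullet> e k"
      by (simp add: algebra_simps dot_square_norm power2_eq_square)
    also have "\<dots> \<le> norm (e (Suc k)) * norm (e k)" by (rule norm_cauchy_schwarz)
    finally have "((1 + \<kappa> * \<alpha>) * norm (e k)) * norm (e k) \<le> norm (e (Suc k)) * norm (e k)"
      by (simp add: mult_ac)
    then show ?thesis
      by (cases "norm (e k) = 0") (auto simp: mult_le_cancel_right)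
  qed
  have e0: "norm (e 0) = \<delta> / 2"
    using j12 b dl by (simp add: e_def z_def z0_def X0_def)
  have lowb: "norm (e k) \<ge> (1 + \<kappa> * \<alpha>) ^ k * (\<delta> / 2)" for k
  proof (induction k)
    case 0 then show ?case by (simp add: e0)
  next
    case (Suc k)
    have "(1 + \<kappa> * \<alpha>) ^ Suc k * (\<delta> / 2) = (1 + \<kappa> * \<alpha>) * ((1 + \<kappa> * \<alpha>) ^ k * (\<delta> / 2))" by simp
    also have "\<dots> \<le> (1 + \<kappa> * \<alpha>) * norm (e k)"
      using Suc ka al by (intro mult_left_mono) auto
    also have "\<dots> \<le> norm (e (Suc k))" by (rule grow)
    finally show ?case .
  qed
  have upb: "norm (e k) < 2 * \<rho>" for k
  proof -
    have "norm (e k) \<le> dist (snd (z k) $ j1) p + dist (snd (z k) $ j2) p"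
      unfolding e_def dist_norm using norm_triangle_ineq4[of "snd (z k) $ j1 - p" "snd (z k) $ j2 - p"]
      by simp
    then show ?thesis using zin[of k] by simp
  qed
  obtain k where k: "4 * \<rho> / \<delta> < (1 + \<kappa> * \<alpha>) ^ k"
    using real_arch_pow[of "1 + \<kappa> * \<alpha>" "4 * \<rho> / \<delta>"] ka al by auto
  then have "2 * \<rho> < (1 + \<kappa> * \<alpha>) ^ k * (\<delta> / 2)"
    using dl by (simp add: field_simps)
  then show False using lowb[of k] upb[of k] by simp
qed

end

lemma lyap_stable:
  fixes F :: "'e::real_normed_vector \<Rightarrow> 'e" and L :: "'e \<Rightarrow> 'e" and W :: "'e \<Rightarrow> real"
  assumes m1: "m1 > 0" and m2: "m2 > 0"
    and Wlow: "\<And>v. m1 * (norm v)\<^sup>2 \<le> W v" and Wup: "\<And>v. W v \<le> m2 * (norm v)\<^sup>2"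
    and s: "s > 0" and Wdec: "\<And>v. W (L v) \<le> W v - s * (norm v)\<^sup>2"
    and C: "C > 0" and Wcont: "\<And>x y. W (x + y) - W x \<le> C * (norm x * norm y + (norm y)\<^sup>2)"
    and CL: "CL \<ge> 0" and Lb: "\<And>v. norm (L v) \<le> CL * norm v"
    and rem: "\<And>\<epsilon>. \<epsilon> > 0 \<Longrightarrow> \<exists>\<rho>>0. \<forall>z. norm (z - zs) < \<rho> \<longrightarrow> norm (F z - zs - L (z - zs)) \<le> \<epsilon> * norm (z - zs)"
  shows "locally_stable F zs"
proof -
  define \<epsilon> where "\<epsilon> = min 1 (s / (C * (CL + 1)))"
  have e: "\<epsilon> > 0" using s C CL by (simp add: \<epsilon>_def)
  have e1: "\<epsilon> \<le> 1" by (simp add: \<epsilon>_def)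
  have e2: "C * (CL + 1) * \<epsilon> \<le> s"
  proof -
    have "\<epsilon> \<le> s / (C * (CL + 1))" by (simp add: \<epsilon>_def)
    then show ?thesis using C CL by (simp add: pos_le_divide_eq mult.commute)
  qed
  obtain \<rho> where rho: "\<rho> > 0" and R: "\<And>z. norm (z - zs) < \<rho> \<Longrightarrow> norm (F z - zs - L (z - zs)) \<le> \<epsilon> * norm (z - zs)"
    using rem[OF e] by blast
  have dec: "W (F z - zs) \<le> W (z - zs)" if z: "norm (z - zs) < \<rho>" for z
  proof -
    define v where "v = z - zs"
    define r where "r = F z - zs - L v"
    have nr: "norm r \<le> \<epsilon> * norm v" using R[OF z] by (simp add: r_def v_def)
    have nv: "norm v \<ge> 0" by simp
    have "F z - zs = L v + r" by (simp add: r_def)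
    then have "W (F z - zs) \<le> W (L v) + C * (norm (L v) * norm r + (norm r)\<^sup>2)"
      using Wcont[of "L v" r] by simp
    also have "C * (norm (L v) * norm r + (norm r)\<^sup>2) \<le> C * ((CL * norm v) * (\<epsilon> * norm v) + (\<epsilon> * norm v)\<^sup>2)"
      using C Lb[of v] nr e CL nv
      by (intro mult_left_mono add_mono mult_mono power_mono) auto
    also have "\<dots> = C * (CL + \<epsilon>) * \<epsilon> * (norm v)\<^sup>2" by (simp add: power2_eq_square algebra_simps)
    also have "\<dots> \<le> C * (CL + 1) * \<epsilon> * (norm v)\<^sup>2"
      using C e e1 CL by (intro mult_right_mono mult_left_mono) auto
    also have "\<dots> \<le> s * (norm v)\<^sup>2" using e2 by (intro mult_right_mono) auto
    finally have "W (F z - zs) \<le> W (L v) + s * (norm v)\<^sup>2" by simp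
    then show ?thesis using Wdec[of v] by (simp add: v_def)
  qed
  show ?thesis
    unfolding locally_stable_def
  proof (intro allI impI)
    fix \<epsilon>0 :: real assume e0: "\<epsilon>0 > 0"
    define r0 where "r0 = min \<epsilon>0 \<rho>"
    have r0: "r0 > 0" using e0 rho by (simp add: r0_def)
    define q where "q = min 1 (m1 / m2)"
    have q: "q > 0" "q \<le> 1" "q \<le> m1 / m2" using m1 m2 by (auto simp: q_def)
    define \<delta> where "\<delta> = r0 * q"
    have dl: "\<delta> > 0" using r0 q by (simp add: \<delta>_def)
    show "\<exists>\<delta>>0. \<forall>z0. dist z0 zs < \<delta> \<longrightarrow> (\<forall>k. dist ((F ^^ k) z0) zs < \<epsilon>0)"
    proof (intro exI[of _ \<delta>] conjI allI impI dl)
      fix z0 k assume z0: "dist z0 zs < \<delta>"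
      have n0: "norm (z0 - zs) < \<delta>" using z0 by (simp add: dist_norm)
      have "\<delta> \<le> r0" using r0 q by (simp add: \<delta>_def mult_left_le)
      have W0: "W (z0 - zs) < m1 * r0\<^sup>2"
      proof -
        have "W (z0 - zs) \<le> m2 * (norm (z0 - zs))\<^sup>2" by (rule Wup)
        also have "\<dots> < m2 * \<delta>\<^sup>2" using n0 m2 by (intro mult_strict_left_mono power_strict_mono) auto
        also have "\<delta>\<^sup>2 = r0\<^sup>2 * q * q" by (simp add: \<delta>_def power2_eq_square)
        also have "m2 * (r0\<^sup>2 * q * q) \<le> m2 * (r0\<^sup>2 * (m1 / m2) * 1)"
          using q m2 m1 by (intro mult_left_mono mult_mono) auto
        also have "\<dots> = m1 * r0\<^sup>2" using m2 by simp
        finally show ?thesis .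
      qed
      have inv: "W ((F ^^ k) z0 - zs) \<le> W (z0 - zs) \<and> norm ((F ^^ k) z0 - zs) < r0" for k
      proof (induction k)
        case 0
        then show ?case using n0 \<open>\<delta> \<le> r0\<close> by simp
      next
        case (Suc k)
        have "W ((F ^^ Suc k) z0 - zs) \<le> W ((F ^^ k) z0 - zs)"
          using dec[of "(F ^^ k) z0"] Suc r0_def by simp
        then have W1: "W ((F ^^ Suc k) z0 - zs) \<le> W (z0 - zs)" using Suc by simp
        have "m1 * (norm ((F ^^ Suc k) z0 - zs))\<^sup>2 < m1 * r0\<^sup>2"
          using Wlow[of "(F ^^ Suc k) z0 - zs"] W1 W0 by simp
        then have "(norm ((F ^^ Suc k) z0 - zs))\<^sup>2 < r0\<^sup>2" using m1 by simp
        then have "norm ((F ^^ Suc k) z0 - zs) < r0" using r0 by (simp add: power_less_imp_less_base)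
        then show ?case using W1 by simp
      qed
      show "dist ((F ^^ k) z0) zs < \<epsilon>0"
        using inv[of k] by (simp add: dist_norm r0_def)
    qed
  qed
qed

lemma npair: "(norm v)\<^sup>2 = (norm (fst v))\<^sup>2 + (norm (snd v))\<^sup>2"
  by (simp add: norm_prod_def)

lemma nfst: "norm (fst v) \<le> norm v"
  unfolding norm_prod_def by (rule real_sqrt_sum_squares_ge1)

lemma nsnd: "norm (snd v) \<le> norm v"
  unfolding norm_prod_def by (rule real_sqrt_sum_squares_ge2)

lemma nsum: "norm v \<le> norm (fst v) + norm (snd v)"
proof -
  have "(norm v)\<^sup>2 \<le> (norm (fst v) + norm (snd v))\<^sup>2"
    unfolding npair by (simp add: power2_eq_square algebra_simps)
  then show ?thesis by (rule power2_le_imp_le) simp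
qed

lemma nvec_sum: "norm (x :: ('a::real_normed_vector, 'n::finite) vec) \<le> (\<Sum>j\<in>UNIV. norm (x $ j))"
  unfolding norm_vec_def by (rule L2_set_le_sum) simp

locale gan_stable = gan a xr f' f'' V lam mu k1 k3
  for a :: "'d::euclidean_space \<Rightarrow> 'b::euclidean_space"
    and xr :: "'n::finite \<Rightarrow> 'd"
    and f' f'' V lam mu k1 k3 +
  fixes xgs :: "('d, 'n) vec"
  assumes supp: "\<forall>j. xgs $ j \<in> range xr" and sd: "same_distr xr xgs"
begin

lemma sum_eq: "(\<Sum>i\<in>UNIV. a (xr i)) = (\<Sum>j\<in>UNIV. a (xgs $ j))"
proof -
  define T where "T = range xr \<union> range (\<lambda>j. xgs $ j)"
  have fT: "finite T" by (simp add: T_def)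
  have g: "(\<Sum>j\<in>UNIV. a (xgs $ j)) = (\<Sum>y\<in>T. real (card {j. xgs $ j = y}) *\<^sub>R a y)"
  proof -
    have "(\<Sum>y\<in>T. \<Sum>j\<in>{j\<in>UNIV. xgs $ j = y}. a (xgs $ j)) = (\<Sum>j\<in>UNIV. a (xgs $ j))"
      by (rule sum.group) (auto simp: fT T_def)
    moreover have "(\<Sum>j\<in>{j\<in>UNIV. xgs $ j = y}. a (xgs $ j)) = real (card {j. xgs $ j = y}) *\<^sub>R a y" for y
    proof -
      have "(\<Sum>j\<in>{j\<in>UNIV. xgs $ j = y}. a (xgs $ j)) = (\<Sum>j\<in>{j. xgs $ j = y}. a y)" by (rule sum.cong) auto
      then show ?thesis by (simp add: sum_constant_scaleR)
    qed
    ultimately show ?thesis by simp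
  qed
  have r: "(\<Sum>i\<in>UNIV. a (xr i)) = (\<Sum>y\<in>T. real (card {i. xr i = y}) *\<^sub>R a y)"
  proof -
    have "(\<Sum>y\<in>T. \<Sum>i\<in>{i\<in>UNIV. xr i = y}. a (xr i)) = (\<Sum>i\<in>UNIV. a (xr i))"
      by (rule sum.group) (auto simp: fT T_def)
    moreover have "(\<Sum>i\<in>{i\<in>UNIV. xr i = y}. a (xr i)) = real (card {i. xr i = y}) *\<^sub>R a y" for y
    proof -
      have "(\<Sum>i\<in>{i\<in>UNIV. xr i = y}. a (xr i)) = (\<Sum>i\<in>{i. xr i = y}. a y)" by (rule sum.cong) auto
      then show ?thesis by (simp add: sum_constant_scaleR)
    qed
    ultimately show ?thesis by simp
  qed
  show ?thesis using sd unfolding g r same_distr_def by simp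
qed

lemma theta_zero:
  assumes eta: "eta > 0" and fp: "gan_step a xr lam eta g (\<theta>s, xgs) = (\<theta>s, xgs)"
  shows "\<theta>s = 0"
proof -
  have "lam *\<^sub>R \<theta>s = (\<Sum>i\<in>UNIV. (1 / real CARD('n)) *\<^sub>R a (xr i)) - (\<Sum>j\<in>UNIV. (1 / real CARD('n)) *\<^sub>R a (xgs $ j))"
    by (rule fixed_theta[OF eta fp])
  also have "\<dots> = 0" using sum_eq by (simp add: scaleR_sum_right[symmetric])
  finally show ?thesis using lam_pos by simp
qed

lemma inj_g: "inj (\<lambda>j. xgs $ j)"
proof (rule injI)
  fix j1 j2 assume eq: "xgs $ j1 = xgs $ j2"
  obtain i where i: "xgs $ j1 = xr i" using supp by blast
  have "{i'. xr i' = xr i} = {i}" using inj_xr by (simp add: inj_eq)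
  moreover have "card {j. xgs $ j = xr i} = card {i'. xr i' = xr i}" using sd unfolding same_distr_def by blast
  ultimately have c1: "card {j. xgs $ j = xr i} = 1" by simp
  show "j1 = j2"
  proof (rule ccontr)
    assume ne: "j1 \<noteq> j2"
    have "{j1, j2} \<subseteq> {j. xgs $ j = xr i}" using eq i by auto
    then have "card {j1, j2} \<le> card {j. xgs $ j = xr i}" by (intro card_mono) auto
    then have "card {j1, j2} \<le> 1" using c1 by simp
    then show False using ne by simp
  qed
qed

lemma orth: "j \<noteq> l \<Longrightarrow> blinfun_apply (f' (xgs $ j)) v \<bullet> blinfun_apply (f' (xgs $ l)) w = 0"
proof -
  assume ne: "j \<noteq> l"
  obtain i where i: "xgs $ j = xr i" using supp by blast
  obtain i' where i': "xgs $ l = xr i'" using supp by blast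
  have "i \<noteq> i'" using ne i i' inj_g by (metis injD)
  then have z: "\<forall>x\<in>V i. \<forall>y\<in>V i'. a x \<bullet> a y = 0" using Vz by blast
  show ?thesis unfolding i i' by (rule iso_mixed[OF da Vo Vx Vo Vx z])
qed

definition "NN = real CARD('n)"

definition Bop :: "('d, 'n) vec \<Rightarrow> 'b" where
  "Bop w = (\<Sum>j\<in>UNIV. (1 / NN) *\<^sub>R blinfun_apply (f' (xgs $ j)) (w $ j))"

definition Bad :: "'b \<Rightarrow> ('d, 'n) vec" where
  "Bad u = (\<chi> j. (1 / NN) *\<^sub>R adjoint (blinfun_apply (f' (xgs $ j))) u)"

definition "KK = 1 + (\<Sum>j\<in>UNIV. norm (f' (xgs $ j)))"

lemma NN_pos: "NN > 0" by (simp add: NN_def)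
lemma NN_ge1: "NN \<ge> 1" by (simp add: NN_def)
lemma KK_ge1: "KK \<ge> 1" by (simp add: KK_def sum_nonneg)

lemma Bop_add: "Bop (w + w') = Bop w + Bop w'"
  by (simp add: Bop_def blinfun.add_right scaleR_add_right sum.distrib)
lemma Bop_scale: "Bop (c *\<^sub>R w) = c *\<^sub>R Bop w"
  by (simp add: Bop_def blinfun.scaleR_right scaleR_sum_right)
lemma Bop_diff: "Bop (w - w') = Bop w - Bop w'"
  by (simp add: Bop_def blinfun.diff_right scaleR_diff_right sum_subtractf)

lemma adjB: "Bop w \<bullet> u = w \<bullet> Bad u"
  by (simp add: Bop_def Bad_def inner_vec_def inner_sum_left adj_blin)

lemma Bop_bound: "norm (Bop w) \<le> KK * norm w"
proof -
  have "norm (Bop w) \<le> (\<Sum>j\<in>UNIV. norm ((1 / NN) *\<^sub>R blinfun_apply (f' (xgs $ j)) (w $ j)))"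
    unfolding Bop_def by (rule norm_sum)
  also have "\<dots> \<le> (\<Sum>j\<in>UNIV. norm (f' (xgs $ j)) * norm w)"
  proof (rule sum_mono)
    fix j
    have "norm ((1 / NN) *\<^sub>R blinfun_apply (f' (xgs $ j)) (w $ j)) = (1 / NN) * norm (blinfun_apply (f' (xgs $ j)) (w $ j))"
      using NN_pos by simp
    also have "\<dots> \<le> 1 * (norm (f' (xgs $ j)) * norm (w $ j))"
      using NN_ge1 by (intro mult_mono norm_blinfun) auto
    also have "\<dots> \<le> norm (f' (xgs $ j)) * norm w"
      using mult_left_mono[OF Finite_Cartesian_Product.norm_nth_le[of w j] norm_ge_zero[of "f' (xgs $ j)"]] by simp
    finally show "norm ((1 / NN) *\<^sub>R blinfun_apply (f' (xgs $ j)) (w $ j)) \<le> norm (f' (xgs $ j)) * norm w" .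
  qed
  also have "\<dots> \<le> KK * norm w" by (simp add: KK_def sum_distrib_right[symmetric] mult_right_mono)
  finally show ?thesis .
qed

lemma Bad_bound: "norm (Bad u) \<le> KK * norm u"
proof -
  have "(norm (Bad u))\<^sup>2 = Bad u \<bullet> Bad u" by (simp add: power2_norm_eq_inner)
  also have "\<dots> = Bop (Bad u) \<bullet> u" by (simp add: adjB)
  also have "\<dots> \<le> norm (Bop (Bad u)) * norm u" by (rule norm_cauchy_schwarz)
  also have "\<dots> \<le> KK * norm (Bad u) * norm u" by (intro mult_right_mono Bop_bound) auto
  finally have "norm (Bad u) * norm (Bad u) \<le> (KK * norm u) * norm (Bad u)" by (simp add: power2_eq_square mult_ac)
  then show ?thesis
  proof (cases "norm (Bad u) = 0")
    case True
    then show ?thesis using KK_ge1 by simp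
  next
    case False
    then have "norm (Bad u) > 0" by simp
    then show ?thesis using \<open>norm (Bad u) * norm (Bad u) \<le> (KK * norm u) * norm (Bad u)\<close>
      by (simp add: mult_le_cancel_right)
  qed
qed

lemma Bop_coerc: "Bop w \<bullet> Bop w \<ge> (k3 / NN\<^sup>2) * (w \<bullet> w)"
proof -
  have "Bop w \<bullet> Bop w = (\<Sum>l\<in>UNIV. \<Sum>j\<in>UNIV. (1 / NN\<^sup>2) * (blinfun_apply (f' (xgs $ j)) (w $ j) \<bullet> blinfun_apply (f' (xgs $ l)) (w $ l)))"
    by (simp add: Bop_def inner_sum_left inner_sum_right power2_eq_square sum_divide_distrib)
  also have "\<dots> = (\<Sum>j\<in>UNIV. \<Sum>l\<in>UNIV. (1 / NN\<^sup>2) * (blinfun_apply (f' (xgs $ j)) (w $ j) \<bullet> blinfun_apply (f' (xgs $ l)) (w $ l)))"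
    by (rule sum.swap)
  also have "\<dots> = (\<Sum>j\<in>UNIV. (1 / NN\<^sup>2) * (blinfun_apply (f' (xgs $ j)) (w $ j) \<bullet> blinfun_apply (f' (xgs $ j)) (w $ j)))"
  proof (rule sum.cong[OF refl])
    fix j
    have "(\<Sum>l\<in>UNIV. (1 / NN\<^sup>2) * (blinfun_apply (f' (xgs $ j)) (w $ j) \<bullet> blinfun_apply (f' (xgs $ l)) (w $ l)))
       = (\<Sum>l\<in>UNIV. if l = j then (1 / NN\<^sup>2) * (blinfun_apply (f' (xgs $ j)) (w $ j) \<bullet> blinfun_apply (f' (xgs $ j)) (w $ j)) else 0)"
      by (rule sum.cong[OF refl]) (auto simp: orth)
    then show "(\<Sum>l\<in>UNIV. (1 / NN\<^sup>2) * (blinfun_apply (f' (xgs $ j)) (w $ j) \<bullet> blinfun_apply (f' (xgs $ l)) (w $ l)))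
       = (1 / NN\<^sup>2) * (blinfun_apply (f' (xgs $ j)) (w $ j) \<bullet> blinfun_apply (f' (xgs $ j)) (w $ j))" by simp
  qed
  finally have E1: "Bop w \<bullet> Bop w = (\<Sum>j\<in>UNIV. (1 / NN\<^sup>2) * (blinfun_apply (f' (xgs $ j)) (w $ j) \<bullet> blinfun_apply (f' (xgs $ j)) (w $ j)))" .
  have E2: "(\<Sum>j\<in>UNIV. (1 / NN\<^sup>2) * (blinfun_apply (f' (xgs $ j)) (w $ j) \<bullet> blinfun_apply (f' (xgs $ j)) (w $ j))) \<ge> (\<Sum>j\<in>UNIV. (1 / NN\<^sup>2) * (k3 * (w $ j \<bullet> w $ j)))"
  proof (rule sum_mono)
    fix j
    obtain i where i: "xgs $ j = xr i" using supp by blast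
    show "(1 / NN\<^sup>2) * (k3 * (w $ j \<bullet> w $ j)) \<le> (1 / NN\<^sup>2) * (blinfun_apply (f' (xgs $ j)) (w $ j) \<bullet> blinfun_apply (f' (xgs $ j)) (w $ j))"
      unfolding i by (intro mult_left_mono mx) auto
  qed
  have E3: "(\<Sum>j\<in>UNIV. (1 / NN\<^sup>2) * (k3 * (w $ j \<bullet> w $ j))) = (k3 / NN\<^sup>2) * (w \<bullet> w)"
    by (simp add: inner_vec_def sum_distrib_left)
  show ?thesis using E1 E2 E3 by linarith
qed

end

context gan_stable begin

definition "gam = mu * lam / (2 * mu * KK\<^sup>2 + lam\<^sup>2)"
definition "kap = k3 / NN\<^sup>2"
definition "s0 = min (mu * lam) (gam * kap)"
definition "CC2 = (mu + gam * mu) * (2 * lam\<^sup>2 + 2 * KK\<^sup>2) + mu\<^sup>2 * KK\<^sup>2 + gam * mu * KK ^ 4 + 1"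
definition "eta0 = s0 / (2 * CC2)"

definition Lop :: "real \<Rightarrow> 'b \<times> ('d, 'n) vec \<Rightarrow> 'b \<times> ('d, 'n) vec" where
  "Lop eta v = (fst v - eta *\<^sub>R (lam *\<^sub>R fst v + Bop (snd v)), snd v + (mu * eta) *\<^sub>R Bad (fst v))"

definition Wf :: "'b \<times> ('d, 'n) vec \<Rightarrow> real" where
  "Wf v = mu * (fst v \<bullet> fst v) + snd v \<bullet> snd v + 2 * gam * (fst v \<bullet> Bop (snd v))"

lemma Dpos: "2 * mu * KK\<^sup>2 + lam\<^sup>2 > 0" using mu_pos lam_pos by (intro add_nonneg_pos) auto

lemma gam_pos: "gam > 0" using mu_pos lam_pos Dpos by (simp add: gam_def)

lemma gam_eq: "gam * (2 * mu * KK\<^sup>2 + lam\<^sup>2) = mu * lam"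
  using Dpos by (simp add: gam_def)

lemma gam_small: "4 * gam\<^sup>2 * KK\<^sup>2 \<le> mu"
proof -
  define D where "D = 2 * mu * KK\<^sup>2 + lam\<^sup>2"
  have D: "D > 0" using Dpos by (simp add: D_def)
  have "D\<^sup>2 = 4 * mu\<^sup>2 * KK ^ 4 + 4 * mu * KK\<^sup>2 * lam\<^sup>2 + lam ^ 4"
    by (simp add: D_def power2_eq_square power4_eq_xxxx algebra_simps)
  then have "4 * mu * lam\<^sup>2 * KK\<^sup>2 \<le> D\<^sup>2" by (simp add: algebra_simps)
  then have "mu * (4 * mu * lam\<^sup>2 * KK\<^sup>2) \<le> mu * D\<^sup>2" using mu_pos by simp
  then have "4 * (mu * lam)\<^sup>2 * KK\<^sup>2 \<le> mu * D\<^sup>2" by (simp add: power2_eq_square algebra_simps)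
  moreover have "mu * lam = gam * D" using gam_eq by (simp add: D_def)
  then have sq: "(mu * lam)\<^sup>2 = gam\<^sup>2 * D\<^sup>2" by (simp add: power_mult_distrib)
  have "4 * gam\<^sup>2 * KK\<^sup>2 * D\<^sup>2 = 4 * (mu * lam)\<^sup>2 * KK\<^sup>2" unfolding sq by (simp add: algebra_simps)
  ultimately have "4 * gam\<^sup>2 * KK\<^sup>2 * D\<^sup>2 \<le> mu * D\<^sup>2" by linarith
  then show ?thesis using D by simp
qed

lemma kap_pos: "kap > 0" using k3_pos NN_pos by (simp add: kap_def)
lemma s0_pos: "s0 > 0" using mu_pos lam_pos gam_pos kap_pos by (simp add: s0_def)
lemma CC2_pos: "CC2 > 0"
proof -
  have "0 \<le> (mu + gam * mu) * (2 * lam\<^sup>2 + 2 * KK\<^sup>2) + mu\<^sup>2 * KK\<^sup>2 + gam * mu * KK ^ 4"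
    using mu_pos gam_pos by (intro add_nonneg_nonneg mult_nonneg_nonneg) auto
  then show ?thesis by (simp add: CC2_def)
qed
lemma eta0_pos: "eta0 > 0" using s0_pos CC2_pos by (simp add: eta0_def)

lemma cross: "\<bar>2 * gam * (u \<bullet> Bop w)\<bar> \<le> mu / 2 * (u \<bullet> u) + 1 / 2 * (w \<bullet> w)"
proof -
  define p where "p = norm u"
  define q where "q = norm w"
  have "\<bar>u \<bullet> Bop w\<bar> \<le> norm u * norm (Bop w)" by (rule Cauchy_Schwarz_ineq2)
  also have "\<dots> \<le> norm u * (KK * norm w)" by (intro mult_left_mono Bop_bound) auto
  finally have c1: "\<bar>u \<bullet> Bop w\<bar> \<le> KK * p * q" by (simp add: p_def q_def mult_ac)
  have "2 * gam * (KK * p * q) \<le> mu / 2 * p\<^sup>2 + 1 / 2 * q\<^sup>2"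
  proof -
    have "0 \<le> 1 / 2 * (q - 2 * gam * KK * p)\<^sup>2 + (mu / 2 - 2 * gam\<^sup>2 * KK\<^sup>2) * p\<^sup>2"
      using gam_small by (intro add_nonneg_nonneg mult_nonneg_nonneg) auto
    also have "\<dots> = mu / 2 * p\<^sup>2 + 1 / 2 * q\<^sup>2 - 2 * gam * (KK * p * q)"
      by (simp add: power2_eq_square algebra_simps)
    finally show ?thesis by simp
  qed
  moreover have "\<bar>2 * gam * (u \<bullet> Bop w)\<bar> \<le> 2 * gam * (KK * p * q)"
    using c1 gam_pos by (simp add: abs_mult)
  ultimately show ?thesis by (simp add: p_def q_def dot_square_norm)
qed

lemma uu: "u \<bullet> u = (norm u)\<^sup>2" by (simp add: power2_norm_eq_inner)

lemma W_low: "min mu 1 / 2 * (norm v)\<^sup>2 \<le> Wf v"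
proof -
  have c: "\<bar>2 * gam * (fst v \<bullet> Bop (snd v))\<bar> \<le> mu / 2 * (fst v \<bullet> fst v) + 1 / 2 * (snd v \<bullet> snd v)" by (rule cross)
  have "min mu 1 / 2 * (norm v)\<^sup>2 = min mu 1 / 2 * (fst v \<bullet> fst v) + min mu 1 / 2 * (snd v \<bullet> snd v)"
    by (simp add: npair uu algebra_simps)
  also have "\<dots> \<le> mu / 2 * (fst v \<bullet> fst v) + 1 / 2 * (snd v \<bullet> snd v)"
    by (intro add_mono mult_right_mono) auto
  finally show ?thesis using c by (simp add: Wf_def)
qed

lemma W_up: "Wf v \<le> (3 / 2 * max mu 1) * (norm v)\<^sup>2"
proof -
  have c: "\<bar>2 * gam * (fst v \<bullet> Bop (snd v))\<bar> \<le> mu / 2 * (fst v \<bullet> fst v) + 1 / 2 * (snd v \<bullet> snd v)" by (rule cross)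
  have "3 / 2 * mu * (fst v \<bullet> fst v) + 3 / 2 * (snd v \<bullet> snd v) \<le> (3 / 2 * max mu 1) * (fst v \<bullet> fst v) + (3 / 2 * max mu 1) * (snd v \<bullet> snd v)"
    by (intro add_mono mult_right_mono) auto
  also have "\<dots> = (3 / 2 * max mu 1) * (norm v)\<^sup>2" by (simp add: npair uu algebra_simps)
  finally show ?thesis using c by (simp add: Wf_def)
qed

lemma L_bound: "eta \<ge> 0 \<Longrightarrow> norm (Lop eta v) \<le> (2 + eta * lam + eta * KK + mu * eta * KK) * norm v"
proof -
  assume eta: "eta \<ge> 0"
  define u where "u = fst v"
  define w where "w = snd v"
  have nu: "norm u \<le> norm v" and nw: "norm w \<le> norm v" by (simp_all add: u_def w_def nfst nsnd)
  have "norm (fst (Lop eta v)) \<le> norm u + eta * (lam * norm u + KK * norm w)"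
  proof -
    have "norm (fst (Lop eta v)) = norm (u - eta *\<^sub>R (lam *\<^sub>R u + Bop w))"
      by (simp add: Lop_def u_def w_def)
    also have "\<dots> \<le> norm u + norm (eta *\<^sub>R (lam *\<^sub>R u + Bop w))"
      by (rule norm_triangle_ineq4)
    also have "norm (eta *\<^sub>R (lam *\<^sub>R u + Bop w)) \<le> eta * (lam * norm u + KK * norm w)"
    proof -
      have "norm (lam *\<^sub>R u + Bop w) \<le> lam * norm u + KK * norm w"
        using norm_triangle_ineq[of "lam *\<^sub>R u" "Bop w"] Bop_bound[of w] lam_pos by simp
      then show ?thesis using eta by (simp add: mult_left_mono)
    qed
    finally show ?thesis by simp
  qed
  also have "\<dots> \<le> (1 + eta * lam + eta * KK) * norm v"
    using nu nw eta lam_pos KK_ge1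
    by (simp add: algebra_simps add_mono mult_left_mono mult_mono)
  finally have n1: "norm (fst (Lop eta v)) \<le> (1 + eta * lam + eta * KK) * norm v" .
  have "norm (snd (Lop eta v)) \<le> norm w + mu * eta * (KK * norm u)"
  proof -
    have "norm (snd (Lop eta v)) = norm (w + (mu * eta) *\<^sub>R Bad u)"
      by (simp add: Lop_def u_def w_def)
    also have "\<dots> \<le> norm w + norm ((mu * eta) *\<^sub>R Bad u)"
      by (rule norm_triangle_ineq)
    also have "norm ((mu * eta) *\<^sub>R Bad u) \<le> mu * eta * (KK * norm u)"
      using Bad_bound[of u] mu_pos eta by (simp add: abs_mult mult_left_mono)
    finally show ?thesis by simp
  qed
  also have "\<dots> \<le> (1 + mu * eta * KK) * norm v"
    using nu nw eta mu_pos KK_ge1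
    by (simp add: algebra_simps add_mono mult_left_mono mult_mono)
  finally have n2: "norm (snd (Lop eta v)) \<le> (1 + mu * eta * KK) * norm v" .
  have "norm (Lop eta v) \<le> norm (fst (Lop eta v)) + norm (snd (Lop eta v))" by (rule nsum)
  also have "\<dots> \<le> (2 + eta * lam + eta * KK + mu * eta * KK) * norm v" using n1 n2 by (simp add: algebra_simps)
  finally show ?thesis .
qed

end

context gan_stable begin

lemma uB_bound: "\<bar>u \<bullet> Bop w\<bar> \<le> KK * (norm u * norm w)"
proof -
  have "\<bar>u \<bullet> Bop w\<bar> \<le> norm u * norm (Bop w)" by (rule Cauchy_Schwarz_ineq2)
  also have "\<dots> \<le> norm u * (KK * norm w)" by (intro mult_left_mono Bop_bound) auto
  finally show ?thesis by (simp add: mult_ac)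
qed

definition "Cw = 2 * mu + 2 + 4 * gam * KK"

lemma Cw_pos: "Cw > 0" using mu_pos gam_pos KK_ge1 by (simp add: Cw_def add_pos_nonneg)

lemma W_cont: "Wf (x + y) - Wf x \<le> Cw * (norm x * norm y + (norm y)\<^sup>2)"
proof -
  define ux where "ux = fst x"
  define wx where "wx = snd x"
  define uy where "uy = fst y"
  define wy where "wy = snd y"
  define nx where "nx = norm x"
  define ny where "ny = norm y"
  have nx: "norm ux \<le> nx" "norm wx \<le> nx" by (simp_all add: ux_def wx_def nx_def nfst nsnd)
  have ny: "norm uy \<le> ny" "norm wy \<le> ny" by (simp_all add: uy_def wy_def ny_def nfst nsnd)
  have nn: "nx \<ge> 0" "ny \<ge> 0" by (simp_all add: nx_def ny_def)
  have e: "Wf (x + y) - Wf x = mu * (2 * (ux \<bullet> uy)) + mu * (uy \<bullet> uy) + 2 * (wx \<bullet> wy) + wy \<bullet> wy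
      + 2 * gam * (ux \<bullet> Bop wy) + 2 * gam * (uy \<bullet> Bop wx) + 2 * gam * (uy \<bullet> Bop wy)"
    by (simp add: Wf_def ux_def wx_def uy_def wy_def Bop_add inner_simps inner_commute algebra_simps)
  have ip: "\<bar>p \<bullet> q\<bar> \<le> A * B" if "norm p \<le> A" "norm q \<le> B" for p q :: "'z::real_inner" and A B
  proof -
    have "\<bar>p \<bullet> q\<bar> \<le> norm p * norm q" by (rule Cauchy_Schwarz_ineq2)
    also have "\<dots> \<le> A * B" using that by (intro mult_mono) (auto intro: order_trans[OF norm_ge_zero])
    finally show ?thesis .
  qed
  have b1: "ux \<bullet> uy \<le> nx * ny" using ip[OF nx(1) ny(1)] by simp
  have b2: "uy \<bullet> uy \<le> ny * ny" using ip[OF ny(1) ny(1)] by simp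
  have b3: "wx \<bullet> wy \<le> nx * ny" using ip[OF nx(2) ny(2)] by simp
  have b4: "wy \<bullet> wy \<le> ny * ny" using ip[OF ny(2) ny(2)] by simp
  have kb: "\<bar>p \<bullet> Bop q\<bar> \<le> KK * (A * B)" if "norm p \<le> A" "norm q \<le> B" for p q A B
  proof -
    have "\<bar>p \<bullet> Bop q\<bar> \<le> KK * (norm p * norm q)" by (rule uB_bound)
    also have "\<dots> \<le> KK * (A * B)" using that KK_ge1 by (intro mult_left_mono mult_mono) (auto intro: order_trans[OF norm_ge_zero])
    finally show ?thesis .
  qed
  have b5: "ux \<bullet> Bop wy \<le> KK * (nx * ny)" using kb[OF nx(1) ny(2)] by simp
  have b6: "uy \<bullet> Bop wx \<le> KK * (nx * ny)" using kb[OF ny(1) nx(2)] by (simp add: mult_ac)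
  have b7: "uy \<bullet> Bop wy \<le> KK * (ny * ny)" using kb[OF ny(1) ny(2)] by simp
  have m1: "mu * (2 * (ux \<bullet> uy)) \<le> mu * (2 * (nx * ny))" using b1 mu_pos by simp
  have m2: "mu * (uy \<bullet> uy) \<le> mu * (ny * ny)" using b2 mu_pos by simp
  have m5: "2 * gam * (ux \<bullet> Bop wy) \<le> 2 * gam * (KK * (nx * ny))" using b5 gam_pos by simp
  have m6: "2 * gam * (uy \<bullet> Bop wx) \<le> 2 * gam * (KK * (nx * ny))" using b6 gam_pos by simp
  have m7: "2 * gam * (uy \<bullet> Bop wy) \<le> 2 * gam * (KK * (ny * ny))" using b7 gam_pos by simp
  have "Wf (x + y) - Wf x \<le> mu * (2 * (nx * ny)) + mu * (ny * ny) + 2 * (nx * ny) + ny * ny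
      + 2 * gam * (KK * (nx * ny)) + 2 * gam * (KK * (nx * ny)) + 2 * gam * (KK * (ny * ny))"
    unfolding e using m1 m2 m5 m6 m7 b3 b4 by linarith
  also have "\<dots> = (2 * mu + 2 + 4 * gam * KK) * (nx * ny) + (mu + 1 + 2 * gam * KK) * (ny * ny)"
    by (simp add: algebra_simps)
  also have "\<dots> \<le> Cw * (nx * ny) + Cw * (ny * ny)"
    using nn mu_pos gam_pos KK_ge1 by (intro add_mono mult_right_mono) (auto simp: Cw_def)
  finally show ?thesis by (simp add: nx_def ny_def power2_eq_square algebra_simps)
qed

end

context gan_stable begin

lemma W_dec:
  assumes eta: "0 < eta" "eta \<le> eta0"
  shows "Wf (Lop eta v) \<le> Wf v - (eta * s0 / 2) * (norm v)\<^sup>2"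
proof -
  define u where "u = fst v"
  define w where "w = snd v"
  define Q where "Q = Bad u"
  define P where "P = lam *\<^sub>R u + Bop w"
  define BQ where "BQ = Bop Q"
  define uu where "uu = u \<bullet> u"
  define ww where "ww = w \<bullet> w"
  define ub where "ub = u \<bullet> Bop w"
  define bb where "bb = Bop w \<bullet> Bop w"
  define qq where "qq = Q \<bullet> Q"
  define pp where "pp = P \<bullet> P"
  define pq where "pq = P \<bullet> BQ"
  define S where "S = uu + ww"
  have S: "S = (norm v)\<^sup>2" by (simp add: S_def uu_def ww_def u_def w_def npair power2_norm_eq_inner)
  have uu0: "uu \<ge> 0" and ww0: "ww \<ge> 0" by (simp_all add: uu_def ww_def)
  have f1: "w \<bullet> Q = ub" using adjB[of w u] by (simp add: Q_def ub_def inner_commute)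
  have f2: "u \<bullet> BQ = qq" using adjB[of Q u] by (simp add: BQ_def qq_def Q_def inner_commute)
  have LL: "Lop eta v = (u - eta *\<^sub>R P, w + (mu * eta) *\<^sub>R Q)" by (simp add: Lop_def u_def w_def P_def Q_def)
  have i1: "(u - eta *\<^sub>R P) \<bullet> (u - eta *\<^sub>R P) = uu - 2 * eta * (u \<bullet> P) + eta\<^sup>2 * pp"
    by (simp add: uu_def pp_def inner_simps inner_commute power2_eq_square algebra_simps)
  have i2: "(w + (mu * eta) *\<^sub>R Q) \<bullet> (w + (mu * eta) *\<^sub>R Q) = ww + 2 * mu * eta * (w \<bullet> Q) + (mu * eta)\<^sup>2 * qq"
    by (simp add: ww_def qq_def inner_simps inner_commute power2_eq_square algebra_simps)
  have i3: "(u - eta *\<^sub>R P) \<bullet> Bop (w + (mu * eta) *\<^sub>R Q) = ub + mu * eta * (u \<bullet> BQ) - eta * (P \<bullet> Bop w) - mu * eta\<^sup>2 * pq"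
    by (simp add: Bop_add Bop_scale ub_def pq_def BQ_def inner_simps power2_eq_square algebra_simps)
  have uP: "u \<bullet> P = lam * uu + ub" by (simp add: P_def uu_def ub_def inner_simps)
  have Pb: "P \<bullet> Bop w = lam * ub + bb" by (simp add: P_def ub_def bb_def inner_simps)
  have ppe: "pp = lam\<^sup>2 * uu + 2 * lam * ub + bb"
    by (simp add: pp_def P_def uu_def ub_def bb_def inner_simps inner_commute power2_eq_square algebra_simps)
  define A where "A = - 2 * mu * lam * uu + 2 * gam * mu * qq - 2 * gam * lam * ub - 2 * gam * bb"
  define B where "B = mu * pp + mu\<^sup>2 * qq - 2 * gam * mu * pq"
  have WL: "Wf (Lop eta v) = Wf v + eta * A + eta\<^sup>2 * B"
    unfolding LL Wf_def fst_conv snd_conv i1 i2 i3 uP Pb f1 f2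
    by (simp add: A_def B_def u_def[symmetric] w_def[symmetric] uu_def ww_def ub_def power2_eq_square algebra_simps)
  have qqK: "qq \<le> KK\<^sup>2 * uu"
  proof -
    have "qq = (norm Q)\<^sup>2" by (simp add: qq_def power2_norm_eq_inner)
    also have "\<dots> \<le> (KK * norm u)\<^sup>2" using Bad_bound[of u] by (simp add: Q_def power_mono)
    also have "\<dots> = KK\<^sup>2 * uu" by (simp add: uu_def power_mult_distrib power2_norm_eq_inner)
    finally show ?thesis .
  qed
  have bbk: "bb \<ge> kap * ww" using Bop_coerc[of w] by (simp add: bb_def kap_def ww_def)
  have pp0: "pp \<ge> 0" by (simp add: pp_def)
  have ubb: "- 2 * lam * ub \<le> lam\<^sup>2 * uu + bb" using ppe pp0 by linarith
  have a1: "gam * mu * qq \<le> gam * mu * (KK\<^sup>2 * uu)" using qqK gam_pos mu_pos by simp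
  have a2: "gam * (- 2 * lam * ub) \<le> gam * (lam\<^sup>2 * uu + bb)" using ubb gam_pos by (intro mult_left_mono) auto
  have a3: "gam * (kap * ww) \<le> gam * bb" using bbk gam_pos by (intro mult_left_mono) auto
  have a4: "gam * (2 * mu * KK\<^sup>2 + lam\<^sup>2) * uu = mu * lam * uu" by (simp only: gam_eq)
  have Ab: "A \<le> - (mu * lam) * uu - (gam * kap) * ww"
  proof -
    have "A = - 2 * mu * lam * uu + 2 * (gam * mu * qq) + gam * (- 2 * lam * ub) - 2 * gam * bb"
      by (simp add: A_def algebra_simps)
    also have "\<dots> \<le> - 2 * mu * lam * uu + 2 * (gam * mu * (KK\<^sup>2 * uu)) + gam * (lam\<^sup>2 * uu + bb) - 2 * gam * bb"
      using a1 a2 by linarith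
    also have "\<dots> = - 2 * mu * lam * uu + gam * (2 * mu * KK\<^sup>2 + lam\<^sup>2) * uu - gam * bb"
      by (simp add: algebra_simps)
    also have "\<dots> = - (mu * lam) * uu - gam * bb" unfolding a4 by (simp add: algebra_simps)
    also have "\<dots> \<le> - (mu * lam) * uu - (gam * kap) * ww" using a3 by (simp add: mult.assoc)
    finally show ?thesis .
  qed
  have As: "A \<le> - s0 * S"
  proof -
    have "s0 * uu \<le> (mu * lam) * uu" using uu0 by (intro mult_right_mono) (auto simp: s0_def)
    moreover have "s0 * ww \<le> (gam * kap) * ww" using ww0 by (intro mult_right_mono) (auto simp: s0_def)
    ultimately show ?thesis using Ab by (simp add: S_def algebra_simps)
  qed
  have ppb: "pp \<le> 2 * lam\<^sup>2 * uu + 2 * KK\<^sup>2 * ww"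
  proof -
    have nP: "norm P \<le> lam * norm u + KK * norm w"
      using norm_triangle_ineq[of "lam *\<^sub>R u" "Bop w"] Bop_bound[of w] lam_pos by (simp add: P_def)
    have "pp = (norm P)\<^sup>2" by (simp add: pp_def power2_norm_eq_inner)
    also have "\<dots> \<le> (lam * norm u + KK * norm w)\<^sup>2" using nP by (simp add: power_mono)
    also have "\<dots> \<le> 2 * (lam * norm u)\<^sup>2 + 2 * (KK * norm w)\<^sup>2"
    proof -
      have "0 \<le> (lam * norm u - KK * norm w)\<^sup>2" by simp
      then show ?thesis by (simp add: power2_eq_square algebra_simps)
    qed
    also have "\<dots> = 2 * lam\<^sup>2 * uu + 2 * KK\<^sup>2 * ww"
      by (simp add: uu_def ww_def power_mult_distrib power2_norm_eq_inner)
    finally show ?thesis .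
  qed
  have bq2: "BQ \<bullet> BQ \<le> KK ^ 4 * uu"
  proof -
    have "norm BQ \<le> KK * norm Q" unfolding BQ_def by (rule Bop_bound)
    also have "\<dots> \<le> KK * (KK * norm u)" using Bad_bound[of u] KK_ge1 by (simp add: Q_def)
    finally have "(norm BQ)\<^sup>2 \<le> (KK * (KK * norm u))\<^sup>2" by (simp add: power_mono)
    moreover have "BQ \<bullet> BQ = (norm BQ)\<^sup>2" by (simp add: dot_square_norm)
    moreover have "(KK * (KK * norm u))\<^sup>2 = KK ^ 4 * uu"
      by (simp add: uu_def dot_square_norm power4_eq_xxxx power2_eq_square mult_ac)
    ultimately show ?thesis by simp
  qed
  have pqb: "- 2 * pq \<le> pp + BQ \<bullet> BQ"
  proof -
    have "0 \<le> (P + BQ) \<bullet> (P + BQ)" by simp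
    then show ?thesis by (simp add: pp_def pq_def inner_simps inner_commute)
  qed
  have b1: "gam * mu * (- 2 * pq) \<le> gam * mu * (pp + KK ^ 4 * uu)"
    using pqb bq2 gam_pos mu_pos by (intro mult_left_mono) auto
  have b2: "mu\<^sup>2 * qq \<le> mu\<^sup>2 * (KK\<^sup>2 * uu)" using qqK by (intro mult_left_mono) auto
  have b3: "(mu + gam * mu) * pp \<le> (mu + gam * mu) * (2 * lam\<^sup>2 * uu + 2 * KK\<^sup>2 * ww)"
    using ppb mu_pos gam_pos by (intro mult_left_mono) auto
  have Bb: "B \<le> CC2 * S"
  proof -
    have "B \<le> (mu + gam * mu) * pp + mu\<^sup>2 * (KK\<^sup>2 * uu) + gam * mu * (KK ^ 4 * uu)"
      using b1 b2 by (simp add: B_def algebra_simps)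
    also have "\<dots> \<le> (mu + gam * mu) * (2 * lam\<^sup>2 * uu + 2 * KK\<^sup>2 * ww) + mu\<^sup>2 * (KK\<^sup>2 * uu) + gam * mu * (KK ^ 4 * uu)"
      using b3 by simp
    also have "\<dots> \<le> CC2 * S"
    proof -
      have c1: "0 \<le> (mu + gam * mu) * 2 * KK\<^sup>2 * uu" using mu_pos gam_pos uu0 by simp
      have c2: "0 \<le> (mu + gam * mu) * 2 * lam\<^sup>2 * ww" using mu_pos gam_pos ww0 by simp
      have c3: "0 \<le> (mu\<^sup>2 * KK\<^sup>2 + gam * mu * KK ^ 4) * ww" using mu_pos gam_pos ww0 by simp
      show ?thesis using c1 c2 c3 uu0 ww0 by (simp add: CC2_def S_def algebra_simps)
    qed
    finally show ?thesis .
  qed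
  have etaC: "eta * CC2 \<le> s0 / 2"
    using eta CC2_pos by (simp add: eta0_def pos_le_divide_eq field_simps)
  have S0: "S \<ge> 0" using S by simp
  have "eta * A \<le> eta * (- s0 * S)" using As eta by (intro mult_left_mono) auto
  moreover have "eta\<^sup>2 * B \<le> eta\<^sup>2 * (CC2 * S)" using Bb by (intro mult_left_mono) auto
  moreover have "eta\<^sup>2 * (CC2 * S) \<le> eta * (s0 / 2 * S)"
  proof -
    have "eta\<^sup>2 * (CC2 * S) = eta * ((eta * CC2) * S)" by (simp add: power2_eq_square algebra_simps)
    also have "\<dots> \<le> eta * (s0 / 2 * S)" using etaC S0 eta by (intro mult_left_mono mult_right_mono) auto
    finally show ?thesis .
  qed
  ultimately have "Wf (Lop eta v) \<le> Wf v + eta * (- s0 * S) + eta * (s0 / 2 * S)" using WL by linarith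
  then show ?thesis by (simp add: S algebra_simps)
qed

end

lemma adj_diff_norm:
  fixes A B :: "'a::euclidean_space \<Rightarrow>\<^sub>L 'c::euclidean_space"
  shows "norm (adjoint (blinfun_apply A) u - adjoint (blinfun_apply B) u) \<le> norm (A - B) * norm u"
proof -
  define d where "d = adjoint (blinfun_apply A) u - adjoint (blinfun_apply B) u"
  have "(norm d)\<^sup>2 = d \<bullet> d" by (simp add: power2_norm_eq_inner)
  also have "\<dots> = blinfun_apply (A - B) d \<bullet> u"
    by (simp add: d_def inner_diff_right adj_blin blinfun.diff_left inner_diff_left)
  also have "\<dots> \<le> norm (blinfun_apply (A - B) d) * norm u" by (rule norm_cauchy_schwarz)
  also have "\<dots> \<le> norm (A - B) * norm d * norm u" by (intro mult_right_mono norm_blinfun) auto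
  finally have "norm d * norm d \<le> (norm (A - B) * norm u) * norm d" by (simp add: power2_eq_square mult_ac)
  then have "norm d \<le> norm (A - B) * norm u"
  proof (cases "norm d = 0")
    case True then show ?thesis by simp
  next
    case False
    then have "norm d > 0" by simp
    then show ?thesis using \<open>norm d * norm d \<le> (norm (A - B) * norm u) * norm d\<close>
      by (simp add: mult_le_cancel_right)
  qed
  then show ?thesis by (simp add: d_def)
qed

context gan_stable begin

lemma local_bounds:
  assumes e1: "\<epsilon>1 > 0"
  shows "\<exists>\<rho>>0. \<forall>j x. norm (x - xgs $ j) < \<rho> \<longrightarrow>
      norm (a x - a (xgs $ j) - blinfun_apply (f' (xgs $ j)) (x - xgs $ j)) \<le> \<epsilon>1 * norm (x - xgs $ j)
      \<and> norm (f' x - f' (xgs $ j)) < \<epsilon>1"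
proof -
  have ex: "\<exists>\<rho>>0. \<forall>x. norm (x - xgs $ j) < \<rho> \<longrightarrow>
      norm (a x - a (xgs $ j) - blinfun_apply (f' (xgs $ j)) (x - xgs $ j)) \<le> \<epsilon>1 * norm (x - xgs $ j)
      \<and> norm (f' x - f' (xgs $ j)) < \<epsilon>1" for j
  proof -
    obtain d1 where d1: "d1 > 0" and D1: "\<And>x. norm (x - xgs $ j) < d1 \<Longrightarrow>
        norm (a x - a (xgs $ j) - blinfun_apply (f' (xgs $ j)) (x - xgs $ j)) \<le> \<epsilon>1 * norm (x - xgs $ j)"
      using da[of "xgs $ j"] e1 unfolding has_derivative_at_alt by blast
    have "continuous (at (xgs $ j)) f'" by (rule has_derivative_continuous[OF df])
    then obtain d2 where d2: "d2 > 0" and D2: "\<And>x. dist x (xgs $ j) < d2 \<Longrightarrow> dist (f' x) (f' (xgs $ j)) < \<epsilon>1"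
      using e1 unfolding continuous_at_eps_delta by blast
    show ?thesis
      by (rule exI[of _ "min d1 d2"]) (use d1 d2 D1 D2 in \<open>auto simp: dist_norm\<close>)
  qed
  then obtain rf where rf: "\<And>j. rf j > 0 \<and> (\<forall>x. norm (x - xgs $ j) < rf j \<longrightarrow>
      norm (a x - a (xgs $ j) - blinfun_apply (f' (xgs $ j)) (x - xgs $ j)) \<le> \<epsilon>1 * norm (x - xgs $ j)
      \<and> norm (f' x - f' (xgs $ j)) < \<epsilon>1)"
    by metis
  define \<rho> where "\<rho> = Min (range rf)"
  have rpos: "\<rho> > 0" unfolding \<rho>_def using rf by (subst Min_gr_iff) auto
  have rle: "\<rho> \<le> rf j" for j unfolding \<rho>_def by (rule Min_le) auto
  show ?thesis
  proof (intro exI[of _ \<rho>] conjI rpos allI impI)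
    fix j x assume "norm (x - xgs $ j) < \<rho>"
    then have "norm (x - xgs $ j) < rf j" using rle[of j] by linarith
    then show "norm (a x - a (xgs $ j) - blinfun_apply (f' (xgs $ j)) (x - xgs $ j)) \<le> \<epsilon>1 * norm (x - xgs $ j)"
      "norm (f' x - f' (xgs $ j)) < \<epsilon>1"
      using rf[of j] by blast+
  qed
qed

end

context gan_stable begin

lemma remainder:
  assumes eta: "eta > 0" and e: "\<epsilon> > 0"
  shows "\<exists>\<rho>>0. \<forall>z. norm (z - (0, xgs)) < \<rho> \<longrightarrow>
    norm (gan_step a xr lam eta (mu * eta) z - (0, xgs) - Lop eta (z - (0, xgs))) \<le> \<epsilon> * norm (z - (0, xgs))"
proof -
  define \<epsilon>1 where "\<epsilon>1 = \<epsilon> / (eta * (1 + mu))"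
  have e1: "\<epsilon>1 > 0" using e eta mu_pos by (simp add: \<epsilon>1_def)
  obtain \<rho> where rho: "\<rho> > 0" and R: "\<And>j x. norm (x - xgs $ j) < \<rho> \<Longrightarrow>
      norm (a x - a (xgs $ j) - blinfun_apply (f' (xgs $ j)) (x - xgs $ j)) \<le> \<epsilon>1 * norm (x - xgs $ j)
      \<and> norm (f' x - f' (xgs $ j)) < \<epsilon>1"
    using local_bounds[OF e1] by blast
  have mr: "(\<Sum>i\<in>UNIV. (1 / real CARD('n)) *\<^sub>R a (xr i)) = (\<Sum>j\<in>UNIV. (1 / NN) *\<^sub>R a (xgs $ j))"
    using sum_eq by (simp add: NN_def scaleR_sum_right[symmetric])
  show ?thesis
  proof (intro exI[of _ \<rho>] conjI rho allI impI)
    fix z :: "'b \<times> ('d, 'n) vec"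
    assume zn: "norm (z - (0, xgs)) < \<rho>"
    define v where "v = z - (0, xgs)"
    define u where "u = fst z"
    define X where "X = snd z"
    define w where "w = X - xgs"
    have fv: "fst v = u" "snd v = w" by (simp_all add: v_def u_def X_def w_def)
    have nu: "norm u \<le> norm v" using nfst[of v] fv by simp
    have nw: "norm w \<le> norm v" using nsnd[of v] fv by simp
    have wj: "norm (X $ j - xgs $ j) \<le> norm v" for j
      using Finite_Cartesian_Product.norm_nth_le[of w j] nw by (simp add: w_def)
    have Rj: "norm (a (X $ j) - a (xgs $ j) - blinfun_apply (f' (xgs $ j)) (X $ j - xgs $ j)) \<le> \<epsilon>1 * norm v
        \<and> norm (f' (X $ j) - f' (xgs $ j)) < \<epsilon>1" for j
    proof -
      have lt: "norm (X $ j - xgs $ j) < \<rho>" using wj[of j] zn by (simp add: v_def)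
      have "\<epsilon>1 * norm (X $ j - xgs $ j) \<le> \<epsilon>1 * norm v" using wj[of j] e1 by simp
      then show ?thesis using R[OF lt] by linarith
    qed
    define D where "D = gan_step a xr lam eta (mu * eta) z - (0, xgs) - Lop eta v"
    have Fz: "gan_step a xr lam eta (mu * eta) z = gan_step a xr lam eta (mu * eta) (u, X)"
      by (simp add: u_def X_def)
    have fF: "fst (gan_step a xr lam eta (mu * eta) z) = u + eta *\<^sub>R ((\<Sum>j\<in>UNIV. (1 / NN) *\<^sub>R a (xgs $ j))
                       - (\<Sum>j\<in>UNIV. (1 / NN) *\<^sub>R a (X $ j)) - lam *\<^sub>R u)"
      unfolding Fz step_fst mr by (simp add: NN_def)
    have fL: "fst (Lop eta v) = u - eta *\<^sub>R (lam *\<^sub>R u + Bop w)" by (simp add: Lop_def fv)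
    have Dfst: "fst D = eta *\<^sub>R ((\<Sum>j\<in>UNIV. (1 / NN) *\<^sub>R a (xgs $ j)) - (\<Sum>j\<in>UNIV. (1 / NN) *\<^sub>R a (X $ j)) + Bop w)"
      unfolding D_def fst_diff fF fL by (simp add: algebra_simps)
    have sumeq: "(\<Sum>j\<in>UNIV. (1 / NN) *\<^sub>R a (xgs $ j)) - (\<Sum>j\<in>UNIV. (1 / NN) *\<^sub>R a (X $ j)) + Bop w
       = (\<Sum>j\<in>UNIV. (1 / NN) *\<^sub>R (a (xgs $ j) - a (X $ j) + blinfun_apply (f' (xgs $ j)) (X $ j - xgs $ j)))"
      by (simp add: Bop_def w_def scaleR_add_right scaleR_diff_right sum.distrib sum_subtractf)
    have nfD: "norm (fst D) \<le> eta * (\<epsilon>1 * norm v)"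
    proof -
      have "norm (\<Sum>j\<in>UNIV. (1 / NN) *\<^sub>R (a (xgs $ j) - a (X $ j) + blinfun_apply (f' (xgs $ j)) (X $ j - xgs $ j)))
          \<le> (\<Sum>j\<in>UNIV. norm ((1 / NN) *\<^sub>R (a (xgs $ j) - a (X $ j) + blinfun_apply (f' (xgs $ j)) (X $ j - xgs $ j))))"
        by (rule norm_sum)
      also have "\<dots> \<le> (\<Sum>j::'n\<in>UNIV. (1 / NN) * (\<epsilon>1 * norm v))"
      proof (intro sum_mono)
        fix j
        have "norm (a (xgs $ j) - a (X $ j) + blinfun_apply (f' (xgs $ j)) (X $ j - xgs $ j))
            = norm (a (X $ j) - a (xgs $ j) - blinfun_apply (f' (xgs $ j)) (X $ j - xgs $ j))"
        proof -
          have "a (xgs $ j) - a (X $ j) + blinfun_apply (f' (xgs $ j)) (X $ j - xgs $ j)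
              = - (a (X $ j) - a (xgs $ j) - blinfun_apply (f' (xgs $ j)) (X $ j - xgs $ j))" by (simp add: algebra_simps)
          then show ?thesis by (simp only: norm_minus_cancel)
        qed
        then show "norm ((1 / NN) *\<^sub>R (a (xgs $ j) - a (X $ j) + blinfun_apply (f' (xgs $ j)) (X $ j - xgs $ j))) \<le> (1 / NN) * (\<epsilon>1 * norm v)"
          using Rj[of j] NN_pos by (simp add: divide_right_mono)
      qed
      also have "\<dots> = \<epsilon>1 * norm v" using NN_pos by (simp add: NN_def)
      finally have "norm ((\<Sum>j\<in>UNIV. (1 / NN) *\<^sub>R a (xgs $ j)) - (\<Sum>j\<in>UNIV. (1 / NN) *\<^sub>R a (X $ j)) + Bop w) \<le> \<epsilon>1 * norm v"
        unfolding sumeq .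
      then show ?thesis unfolding Dfst using eta by (simp add: mult_left_mono)
    qed
    have Dsnd: "snd D $ j = (mu * eta * (1 / NN)) *\<^sub>R (adjoint (blinfun_apply (f' (X $ j))) u - adjoint (blinfun_apply (f' (xgs $ j))) u)" for j
    proof -
      have "snd (gan_step a xr lam eta (mu * eta) z) $ j = X $ j + (mu * eta * (1 / NN)) *\<^sub>R adjoint (blinfun_apply (f' (X $ j))) u"
        unfolding Fz step_snd by (simp add: NN_def)
      moreover have "snd (Lop eta v) $ j = w $ j + (mu * eta) *\<^sub>R ((1 / NN) *\<^sub>R adjoint (blinfun_apply (f' (xgs $ j))) u)"
        by (simp add: Lop_def fv Bad_def)
      ultimately show ?thesis unfolding D_def snd_diff vector_minus_component by (simp add: w_def algebra_simps)
    qed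
    have nsD: "norm (snd D) \<le> mu * eta * (\<epsilon>1 * norm v)"
    proof -
      have "norm (snd D) \<le> (\<Sum>j\<in>UNIV. norm (snd D $ j))" by (rule nvec_sum)
      also have "\<dots> \<le> (\<Sum>j::'n\<in>UNIV. (mu * eta * (1 / NN)) * (\<epsilon>1 * norm v))"
      proof (rule sum_mono)
        fix j
        have "norm (adjoint (blinfun_apply (f' (X $ j))) u - adjoint (blinfun_apply (f' (xgs $ j))) u)
            \<le> norm (f' (X $ j) - f' (xgs $ j)) * norm u" by (rule adj_diff_norm)
        also have "\<dots> \<le> \<epsilon>1 * norm v" using Rj[of j] nu e1 by (intro mult_mono) auto
        finally have h: "norm (adjoint (blinfun_apply (f' (X $ j))) u - adjoint (blinfun_apply (f' (xgs $ j))) u) \<le> \<epsilon>1 * norm v" .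
        have "norm (snd D $ j) = (mu * eta * (1 / NN)) * norm (adjoint (blinfun_apply (f' (X $ j))) u - adjoint (blinfun_apply (f' (xgs $ j))) u)"
          unfolding Dsnd using mu_pos eta NN_pos by simp
        also have "\<dots> \<le> (mu * eta * (1 / NN)) * (\<epsilon>1 * norm v)"
          using h mu_pos eta NN_pos by (intro mult_left_mono) auto
        finally show "norm (snd D $ j) \<le> (mu * eta * (1 / NN)) * (\<epsilon>1 * norm v)" .
      qed
      also have "\<dots> = mu * eta * (\<epsilon>1 * norm v)" using NN_pos by (simp add: NN_def)
      finally show ?thesis .
    qed
    have "norm D \<le> norm (fst D) + norm (snd D)" by (rule nsum)
    also have "\<dots> \<le> eta * (\<epsilon>1 * norm v) + mu * eta * (\<epsilon>1 * norm v)" using nfD nsD by simp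
    also have "\<dots> = (\<epsilon>1 * (eta * (1 + mu))) * norm v" by (simp add: algebra_simps)
    also have "\<epsilon>1 * (eta * (1 + mu)) = \<epsilon>" using eta mu_pos by (simp add: \<epsilon>1_def)
    finally show "norm (gan_step a xr lam eta (mu * eta) z - (0, xgs) - Lop eta (z - (0, xgs))) \<le> \<epsilon> * norm (z - (0, xgs))"
      by (simp add: D_def v_def)
  qed
qed

lemma stable:
  assumes eta: "0 < eta" "eta \<le> eta0" and fp: "gan_step a xr lam eta (mu * eta) (\<theta>s, xgs) = (\<theta>s, xgs)"
  shows "locally_stable (gan_step a xr lam eta (mu * eta)) (\<theta>s, xgs)"
proof -
  have th: "\<theta>s = 0" by (rule theta_zero[OF eta(1) fp])
  have "locally_stable (gan_step a xr lam eta (mu * eta)) (0, xgs)"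
  proof (rule lyap_stable[where W = Wf and L = "Lop eta"])
    show "min mu 1 / 2 > 0" using mu_pos by simp
    show "3 / 2 * max mu 1 > 0" by simp
    show "\<And>v. min mu 1 / 2 * (norm v)\<^sup>2 \<le> Wf v" by (rule W_low)
    show "\<And>v. Wf v \<le> 3 / 2 * max mu 1 * (norm v)\<^sup>2" by (rule W_up)
    show "eta * s0 / 2 > 0" using eta s0_pos by simp
    show "\<And>v. Wf (Lop eta v) \<le> Wf v - eta * s0 / 2 * (norm v)\<^sup>2" by (rule W_dec[OF eta])
    show "Cw > 0" by (rule Cw_pos)
    show "\<And>x y. Wf (x + y) - Wf x \<le> Cw * (norm x * norm y + (norm y)\<^sup>2)" by (rule W_cont)
    show "2 + eta * lam + eta * KK + mu * eta * KK \<ge> 0" using eta lam_pos mu_pos KK_ge1 by simp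
    show "\<And>v. norm (Lop eta v) \<le> (2 + eta * lam + eta * KK + mu * eta * KK) * norm v"
      using eta by (intro L_bound) simp
    show "\<And>\<epsilon>. \<epsilon> > 0 \<Longrightarrow> \<exists>\<rho>>0. \<forall>z. norm (z - (0, xgs)) < \<rho> \<longrightarrow>
        norm (gan_step a xr lam eta (mu * eta) z - (0, xgs) - Lop eta (z - (0, xgs))) \<le> \<epsilon> * norm (z - (0, xgs))"
      by (rule remainder[OF eta(1)])
  qed
  then show ?thesis by (simp add: th)
qed

end

theorem corollary1:
  fixes a :: "'d::euclidean_space \<Rightarrow> 'b::euclidean_space"
    and xr :: "'n::finite \<Rightarrow> 'd"
    and lam mu k1 k2 k3 k4 :: real
    and \<theta>s :: 'b and xgs :: "('d, 'n) vec"
  assumes a_C2: "C2 a"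
    and K_smooth: "smooth_fun (\<lambda>z. kern a (fst z) (snd z))"
    and lam_pos: "lam > 0" and mu_pos: "mu > 0"
    and k_pos: "k1 > 0" "k2 > 0" "k3 > 0" "k4 > 0"
    and iso: "isolated_nbhds (kern a) xr"
    and grad_zero: "\<forall>i. GDERIV (\<lambda>x. kern a x (xr i)) (xr i) :> 0"
    and hess: "\<forall>i. neg_hessian_in (kern a) (xr i) k1 k2"
    and mixed: "\<forall>i. mixed_hessian_in (kern a) (xr i) k3 k4"
    and supp: "\<forall>j. xgs $ j \<in> range xr"
  shows "\<exists>\<eta>0>0. \<forall>eta_d. 0 < eta_d \<and> eta_d < \<eta>0 \<and>
           gan_step a xr lam eta_d (mu * eta_d) (\<theta>s, xgs) = (\<theta>s, xgs) \<longrightarrow>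
           (locally_stable (gan_step a xr lam eta_d (mu * eta_d)) (\<theta>s, xgs)
              \<longleftrightarrow> same_distr xr xgs)"
proof -
  obtain f' f'' where da: "\<And>x. (a has_derivative blinfun_apply (f' x)) (at x)"
    and df: "\<And>x. (f' has_derivative blinfun_apply (f'' x)) (at x)"
    and cf: "continuous_on UNIV f''"
    using a_C2 unfolding C2_def by blast
  obtain V :: "'n \<Rightarrow> 'd set" where Vo: "\<And>i. open (V i)" and Vx: "\<And>i. xr i \<in> V i"
    and Vk: "\<And>i l. i \<noteq> l \<Longrightarrow> \<forall>x\<in>V i. \<forall>x'\<in>V l. kern a x x' = 0"
    using iso unfolding isolated_nbhds_def by blast
  have Vz: "\<And>i l x y. i \<noteq> l \<Longrightarrow> x \<in> V i \<Longrightarrow> y \<in> V l \<Longrightarrow> a x \<bullet> a y = 0"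
    using Vk unfolding kern_def by blast
  have hs: "\<And>i e. T2 (f'' (xr i)) e \<bullet> a (xr i) \<le> - k1 * (e \<bullet> e)"
    unfolding T2_def using hess_link[OF da df] hess by blast
  have mx: "\<And>i v. k3 * (v \<bullet> v) \<le> blinfun_apply (f' (xr i)) v \<bullet> blinfun_apply (f' (xr i)) v"
    using mixed_link[OF da] mixed by blast
  interpret G: gan a xr f' f'' V lam mu k1 k3
    by (unfold_locales) (use da df cf lam_pos mu_pos k_pos Vo Vx Vz hs mx in auto)
  show ?thesis
  proof (cases "same_distr xr xgs")
    case True
    interpret S: gan_stable a xr f' f'' V lam mu k1 k3 xgs
      by (unfold_locales) (use supp True in auto)
    show ?thesis
    proof (intro exI[of _ S.eta0] conjI S.eta0_pos allI impI)
      fix eta_d assume H: "0 < eta_d \<and> eta_d < S.eta0 \<and> gan_step a xr lam eta_d (mu * eta_d) (\<theta>s, xgs) = (\<theta>s, xgs)"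
      then have "locally_stable (gan_step a xr lam eta_d (mu * eta_d)) (\<theta>s, xgs)"
        by (intro S.stable) auto
      then show "locally_stable (gan_step a xr lam eta_d (mu * eta_d)) (\<theta>s, xgs) \<longleftrightarrow> same_distr xr xgs"
        using True by simp
    qed
  next
    case False
    show ?thesis
    proof (intro exI[of _ 1] conjI allI impI)
      fix eta_d assume H: "0 < eta_d \<and> eta_d < 1 \<and> gan_step a xr lam eta_d (mu * eta_d) (\<theta>s, xgs) = (\<theta>s, xgs)"
      then have "\<not> locally_stable (gan_step a xr lam eta_d (mu * eta_d)) (\<theta>s, xgs)"
        using G.unstable[of eta_d \<theta>s xgs] supp False by blast
      then show "locally_stable (gan_step a xr lam eta_d (mu * eta_d)) (\<theta>s, xgs) \<longleftrightarrow> same_distr xr xgs"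
        using False by simp
    qed simp
  qed
qed

end
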